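(* Let $K$ be a field of any characteristic. Let $d_1,\ldots,d_n$ be positive integers and let $a_{i,j}$ ($1\le i\le 2$, $1\le j\le n$) be nonnegative integers such that for each $i\in\{1,2\}$ at least one of $a_{i,1},\ldots,a_{i,n}$ is nonzero. Let $A$ be the set of columns of the $n\times(n+2)$ matrix $$\begin{pmatrix} d_1 & 0 & \cdots & 0 & a_{1,1} & a_{2,1}\\ 0 & d_2 & \cdots & 0 & a_{1,2} & a_{2,2}\\ \vdots & & \ddots & & \vdots & \vdots\\ 0 & 0 & \cdots & d_n & a_{1,n} & a_{2,n}\end{pmatrix},$$ so that $V(I_A)$ is a simplicial toric variety and $I_A\subset K[x_1,\ldots,x_{n+2}]$ has height $2$. Then $2\le\mathrm{Split}_{\mathrm{rad}}(I_A)\le 3$.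
   Context: For a configuration $A=\{{\bf a}_1,\ldots,{\bf a}_N\}\subset\mathbb{Z}^n$ with $\ker_{\mathbb{Z}}(A)\cap\mathbb{N}^N=\{{\bf 0}\}$, the toric ideal $I_A$ is the kernel of $K[x_1,\ldots,x_N]\to K[t_1^{\pm1},\ldots,t_n^{\pm1}]$, $x_i\mapsto{\bf t}^{{\bf a}_i}$. $\mathrm{Split}_{\mathrm{rad}}(I_A)$ is the smallest integer $r$ such that there exist toric ideals $I_{A_1},\ldots,I_{A_r}\subset K[x_1,\ldots,x_N]$ with $I_A=\mathrm{rad}(I_{A_1}+\cdots+I_{A_r})$ and $I_{A_i}\ne I_A$ for all $i$. *)

theory Defs
  imports Main "HOL-Library.Poly_Mapping"
begin

(* Polynomials over a field 'k: finitely supported maps from monomials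
(exponent vectors nat =>0 nat) to coefficients. *)

type_synonym 'k mpoly = "(nat \<Rightarrow>\<^sub>0 nat) \<Rightarrow>\<^sub>0 'k"

definition poly_ring :: "nat \<Rightarrow> 'k::field mpoly set" where
  "poly_ring N = {p. \<forall>u \<in> Poly_Mapping.keys p. Poly_Mapping.keys u \<subseteq> {..<N}}"

(* A configuration of N vectors in Z^m: column j (j < N), row k (k < m)
entry B j k. The degree map sends the monomial x^u to the lattice point Au. *)

definition cfg_deg :: "nat \<Rightarrow> (nat \<Rightarrow> nat \<Rightarrow> int) \<Rightarrow> (nat \<Rightarrow>\<^sub>0 nat) \<Rightarrow> nat \<Rightarrow> int" where
  "cfg_deg N B u = (\<lambda>k. \<Sum>j<N. int (Poly_Mapping.lookup u j) * B j k)"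

definition pointed_cfg :: "nat \<Rightarrow> nat \<Rightarrow> (nat \<Rightarrow> nat \<Rightarrow> int) \<Rightarrow> bool" where
  "pointed_cfg N m B \<longleftrightarrow>
     (\<forall>v :: nat \<Rightarrow> nat. (\<forall>k<m. (\<Sum>j<N. int (v j) * B j k) = 0) \<longrightarrow> (\<forall>j<N. v j = 0))"

(* Toric ideal: kernel of the K-algebra map K[x_0..x_{N-1}] \<rightarrow> K[t^{\<pm>1}],
x_j \<mapsto> t^{a_j}. The image of p has coefficient at t^w equal to the sum of the
coefficients of p at monomials u with Au = w (only rows k < m count). *)
definition toric_ideal :: "nat \<Rightarrow> nat \<Rightarrow> (nat \<Rightarrow> nat \<Rightarrow> int) \<Rightarrow> 'k::field mpoly set" where
  "toric_ideal N m B = {p \<in> poly_ring N.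
     \<forall>w :: nat \<Rightarrow> int.
       (\<Sum>u \<in> {u \<in> Poly_Mapping.keys p. \<forall>k<m. cfg_deg N B u k = w k}. Poly_Mapping.lookup p u) = 0}"

definition ideal_sum :: "nat \<Rightarrow> (nat \<Rightarrow> 'k::field mpoly set) \<Rightarrow> 'k mpoly set" where
  "ideal_sum r I = {\<Sum>i<r. f i | f. \<forall>i<r. f i \<in> I i}"

definition radical :: "nat \<Rightarrow> 'k::field mpoly set \<Rightarrow> 'k mpoly set" where
  "radical N J = {f \<in> poly_ring N. \<exists>e::nat. f ^ e \<in> J}"

definition rad_splittable :: "'k::field itself \<Rightarrow> nat \<Rightarrow> nat \<Rightarrow> (nat \<Rightarrow> nat \<Rightarrow> int) \<Rightarrow> nat \<Rightarrow> bool" where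
  "rad_splittable _ N m B r \<longleftrightarrow>
     (\<exists>(ms :: nat \<Rightarrow> nat) (Bs :: nat \<Rightarrow> nat \<Rightarrow> nat \<Rightarrow> int).
        (\<forall>i<r. pointed_cfg N (ms i) (Bs i)) \<and>
        (\<forall>i<r. (toric_ideal N (ms i) (Bs i) :: 'k mpoly set) \<noteq> toric_ideal N m B) \<and>
        (toric_ideal N m B :: 'k mpoly set) =
          radical N (ideal_sum r (\<lambda>i. toric_ideal N (ms i) (Bs i))))"

definition split_rad :: "'k::field itself \<Rightarrow> nat \<Rightarrow> nat \<Rightarrow> (nat \<Rightarrow> nat \<Rightarrow> int) \<Rightarrow> nat" where
  "split_rad K N m B = (LEAST r. rad_splittable K N m B r)"

(* The configuration of the corollary: n \<times> (n+2) matrix with columns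
d_j e_j (j < n), then (a1_j)_j, then (a2_j)_j (0-based indices). *)
definition cor_cfg :: "nat \<Rightarrow> (nat \<Rightarrow> nat) \<Rightarrow> (nat \<Rightarrow> nat) \<Rightarrow> (nat \<Rightarrow> nat) \<Rightarrow> nat \<Rightarrow> nat \<Rightarrow> int" where
  "cor_cfg n d a1 a2 = (\<lambda>j k. if j < n then (if j = k then int (d j) else 0)
                             else if j = n then int (a1 k)
                             else if j = n + 1 then int (a2 k) else 0)"

end

theory Submission
  imports Defs
begin


abbreviation pk :: "('a \<Rightarrow>\<^sub>0 'b::zero) \<Rightarrow> 'a set" where "pk \<equiv> Poly_Mapping.keys"
abbreviation pl :: "('a \<Rightarrow>\<^sub>0 'b::zero) \<Rightarrow> 'a \<Rightarrow> 'b" where "pl \<equiv> Poly_Mapping.lookup"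

definition mono :: "(nat \<Rightarrow>\<^sub>0 nat) \<Rightarrow> 'k::field mpoly" where
  "mono u = Poly_Mapping.single u 1"

definition bin :: "(nat \<Rightarrow>\<^sub>0 nat) \<Rightarrow> (nat \<Rightarrow>\<^sub>0 nat) \<Rightarrow> 'k::field mpoly" where
  "bin u v = mono u - mono v"

definition dg :: "nat \<Rightarrow> nat \<Rightarrow> (nat \<Rightarrow> nat \<Rightarrow> int) \<Rightarrow> (nat \<Rightarrow>\<^sub>0 nat) \<Rightarrow> (nat \<Rightarrow>\<^sub>0 int)" where
  "dg N m B u = Abs_poly_mapping (\<lambda>k. if k < m then cfg_deg N B u k else 0)"

definition phi :: "nat \<Rightarrow> nat \<Rightarrow> (nat \<Rightarrow> nat \<Rightarrow> int) \<Rightarrow> 'k::field mpoly \<Rightarrow> ((nat \<Rightarrow>\<^sub>0 int) \<Rightarrow>\<^sub>0 'k)" where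
  "phi N m B p = (\<Sum>u\<in>pk p. Poly_Mapping.single (dg N m B u) (pl p u))"

lemma lookup_dg: "pl (dg N m B u) k = (if k < m then cfg_deg N B u k else 0)"
proof -
  have "finite {k. (if k < m then cfg_deg N B u k else 0) \<noteq> 0}"
    by (rule finite_subset[of _ "{..<m}"]) auto
  then show ?thesis unfolding dg_def by simp
qed

lemma cfg_deg_add: "cfg_deg N B (u + v) k = cfg_deg N B u k + cfg_deg N B v k"
  unfolding cfg_deg_def by (simp add: lookup_add sum.distrib algebra_simps)

lemma cfg_deg_zero: "cfg_deg N B 0 k = 0"
  unfolding cfg_deg_def by simp

lemma dg_add: "dg N m B (u + v) = dg N m B u + dg N m B v"
  by (rule poly_mapping_eqI) (simp add: lookup_dg lookup_add cfg_deg_add)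

lemma dg_zero: "dg N m B 0 = 0"
  by (rule poly_mapping_eqI) (simp add: lookup_dg cfg_deg_zero)

lemma phi_superset:
  assumes "finite S" "pk p \<subseteq> S"
  shows "phi N m B p = (\<Sum>u\<in>S. Poly_Mapping.single (dg N m B u) (pl p u))"
  unfolding phi_def
  by (rule sum.mono_neutral_left) (use assms in \<open>auto simp: in_keys_iff\<close>)

lemma phi_add: "phi N m B (p + q) = phi N m B p + phi N m B q"
proof -
  let ?S = "pk p \<union> pk q"
  have "pk (p + q) \<subseteq> ?S" by (rule keys_add)
  then have "phi N m B (p + q) = (\<Sum>u\<in>?S. Poly_Mapping.single (dg N m B u) (pl (p + q) u))"
    by (intro phi_superset) auto
  also have "\<dots> = (\<Sum>u\<in>?S. Poly_Mapping.single (dg N m B u) (pl p u))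
      + (\<Sum>u\<in>?S. Poly_Mapping.single (dg N m B u) (pl q u))"
    by (simp add: lookup_add single_add sum.distrib)
  also have "\<dots> = phi N m B p + phi N m B q"
    by (subst (1 2) phi_superset[where S = ?S]) auto
  finally show ?thesis .
qed

lemma phi_zero: "phi N m B 0 = 0"
  unfolding phi_def by simp

lemma phi_uminus: "phi N m B (- p) = - phi N m B p"
  unfolding phi_def by (simp add: single_uminus sum_negf)

lemma phi_diff: "phi N m B (p - q) = phi N m B p - phi N m B q"
  using phi_add[of N m B p "- q"] phi_uminus[of N m B q] by simp

lemma phi_single: "phi N m B (Poly_Mapping.single u c) = Poly_Mapping.single (dg N m B u) c"
  by (cases "c = 0") (simp_all add: phi_def)

lemma phi_sum: "phi N m B (\<Sum>i\<in>I. f i) = (\<Sum>i\<in>I. phi N m B (f i))"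
  by (induction I rule: infinite_finite_induct) (simp_all add: phi_zero phi_add)

lemma poly_expand: "p = (\<Sum>u\<in>pk p. Poly_Mapping.single u (pl p u))"
proof (rule poly_mapping_eqI)
  fix k
  show "pl p k = pl (\<Sum>u\<in>pk p. Poly_Mapping.single u (pl p u)) k"
    by (simp add: lookup_sum lookup_single when_def in_keys_iff)
qed

lemma phi_mult: "phi N m B (p * q) = phi N m B p * phi N m B q"
proof -
  let ?s = "\<lambda>p u. Poly_Mapping.single u (pl p u)"
  have "p * q = (\<Sum>u\<in>pk p. ?s p u) * (\<Sum>v\<in>pk q. ?s q v)"
    by (subst (1) poly_expand, subst (1) poly_expand[of q]) simp
  also have "\<dots> = (\<Sum>u\<in>pk p. \<Sum>v\<in>pk q. ?s p u * ?s q v)"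
    by (simp add: sum_product)
  finally have pq: "p * q = (\<Sum>u\<in>pk p. \<Sum>v\<in>pk q. Poly_Mapping.single (u + v) (pl p u * pl q v))"
    by (simp add: mult_single)
  have "phi N m B (p * q) = (\<Sum>u\<in>pk p. \<Sum>v\<in>pk q. Poly_Mapping.single (dg N m B u + dg N m B v) (pl p u * pl q v))"
    by (subst pq) (simp add: phi_sum phi_single dg_add)
  also have "\<dots> = (\<Sum>u\<in>pk p. \<Sum>v\<in>pk q. Poly_Mapping.single (dg N m B u) (pl p u) * Poly_Mapping.single (dg N m B v) (pl q v))"
    by (simp add: mult_single)
  also have "\<dots> = phi N m B p * phi N m B q"
    by (simp add: phi_def sum_product)
  finally show ?thesis .
qed

lemma phi_one: "phi N m B 1 = 1"
proof -
  have "(1::'k::field mpoly) = Poly_Mapping.single 0 1" by simp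
  then show ?thesis by (metis phi_single dg_zero single_one)
qed

lemma phi_power: "phi N m B (p ^ e) = phi N m B p ^ e"
  by (induction e) (simp_all add: phi_one phi_mult)

lemma lookup_phi: "pl (phi N m B p) w = (\<Sum>u\<in>{u\<in>pk p. dg N m B u = w}. pl p u)"
  unfolding phi_def lookup_sum by (simp add: lookup_single when_def sum.inter_filter[symmetric])

lemma dg_eq_restr:
  "dg N m B u = Abs_poly_mapping (\<lambda>k. if k < m then w k else 0) \<longleftrightarrow> (\<forall>k<m. cfg_deg N B u k = w k)"
proof -
  have fin: "finite {k. (if k < m then w k else 0) \<noteq> 0}"
    by (rule finite_subset[of _ "{..<m}"]) auto
  show ?thesis
    by (auto simp: poly_mapping_eq_iff fun_eq_iff lookup_dg fin)
qed

lemma toric_phi: "toric_ideal N m B = {p \<in> poly_ring N. phi N m B p = 0}"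
proof (intro set_eqI iffI)
  fix p :: "'k::field mpoly"
  assume p: "p \<in> toric_ideal N m B"
  have "phi N m B p = 0"
  proof (rule poly_mapping_eqI)
    fix w
    show "pl (phi N m B p) w = pl 0 w"
    proof (cases "\<forall>k\<ge>m. pl w k = 0")
      case True
      have "{u \<in> pk p. dg N m B u = w} = {u \<in> pk p. \<forall>k<m. cfg_deg N B u k = pl w k}"
      proof -
        have "w = Abs_poly_mapping (\<lambda>k. if k < m then pl w k else 0)"
          by (rule poly_mapping_eqI) (use True in \<open>simp add: lookup_Abs_poly_mapping\<close>)
        then show ?thesis
        proof -
          have "\<And>u. dg N m B u = w \<longleftrightarrow> (\<forall>k<m. cfg_deg N B u k = pl w k)"
            using dg_eq_restr[of N m B _ "pl w"] \<open>w = _\<close> by metis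
          then show ?thesis by auto
        qed
      qed
      then show ?thesis using p unfolding toric_ideal_def by (simp add: lookup_phi)
    next
      case False
      then obtain k where k: "k \<ge> m" "pl w k \<noteq> 0" by auto
      have e: "{u \<in> pk p. dg N m B u = w} = {}"
        using k by (auto simp: lookup_dg)
      show ?thesis by (simp only: lookup_phi e) simp
    qed
  qed
  then show "p \<in> {p \<in> poly_ring N. phi N m B p = 0}"
    using p unfolding toric_ideal_def by simp
next
  fix p :: "'k::field mpoly"
  assume p: "p \<in> {p \<in> poly_ring N. phi N m B p = 0}"
  show "p \<in> toric_ideal N m B"
    unfolding toric_ideal_def
  proof (intro CollectI conjI allI)
    show "p \<in> poly_ring N" using p by simp
    fix w :: "nat \<Rightarrow> int"
    let ?w = "Abs_poly_mapping (\<lambda>k. if k < m then w k else 0)"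
    have "{u \<in> pk p. \<forall>k<m. cfg_deg N B u k = w k} = {u \<in> pk p. dg N m B u = ?w}"
      using dg_eq_restr[of N m B _ w] by auto
    then show "(\<Sum>u\<in>{u \<in> pk p. \<forall>k<m. cfg_deg N B u k = w k}. pl p u) = 0"
      using p lookup_phi[of N m B p ?w] by simp
  qed
qed

definition sp :: "nat \<Rightarrow> (nat \<Rightarrow>\<^sub>0 nat) \<Rightarrow> bool" where
  "sp N u \<longleftrightarrow> pk u \<subseteq> {..<N}"

lemma sp_add: "sp N u \<Longrightarrow> sp N v \<Longrightarrow> sp N (u + v)"
  unfolding sp_def using keys_add[of u v] by auto

lemma sp_zero[simp]: "sp N 0"
  unfolding sp_def by simp

lemma poly_ring_add: "p \<in> poly_ring N \<Longrightarrow> q \<in> poly_ring N \<Longrightarrow> p + q \<in> poly_ring N"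
  unfolding poly_ring_def using keys_add[of p q] by blast

lemma poly_ring_uminus: "p \<in> poly_ring N \<Longrightarrow> - p \<in> poly_ring N"
  unfolding poly_ring_def by (simp add: keys_minus)

lemma poly_ring_diff: "p \<in> poly_ring N \<Longrightarrow> q \<in> poly_ring N \<Longrightarrow> p - q \<in> poly_ring N"
  using poly_ring_add[of p N "- q"] poly_ring_uminus[of q N] by simp

lemma poly_ring_zero[simp]: "0 \<in> poly_ring N"
  unfolding poly_ring_def by simp

lemma poly_ring_single: "sp N u \<Longrightarrow> Poly_Mapping.single u c \<in> poly_ring N"
  unfolding poly_ring_def sp_def by simp

lemma poly_ring_mult: "p \<in> poly_ring N \<Longrightarrow> q \<in> poly_ring N \<Longrightarrow> p * q \<in> poly_ring N"
proof -
  assume p: "p \<in> poly_ring N" and q: "q \<in> poly_ring N"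
  show ?thesis unfolding poly_ring_def mem_Collect_eq
  proof
    fix w assume "w \<in> pk (p * q)"
    then obtain a b where "w = a + b" "a \<in> pk p" "b \<in> pk q"
      using keys_mult[of p q] by blast
    then show "pk w \<subseteq> {..<N}"
      using p q keys_add[of a b] unfolding poly_ring_def by blast
  qed
qed

lemma poly_ring_one[simp]: "1 \<in> poly_ring N"
proof -
  have "(1::'k::field mpoly) = Poly_Mapping.single 0 1" by simp
  then show ?thesis using poly_ring_single[of N 0 "1::'k::field"] by simp
qed

lemma poly_ring_power: "p \<in> poly_ring N \<Longrightarrow> p ^ e \<in> poly_ring N"
  by (induction e) (simp_all add: poly_ring_mult)

lemma poly_ring_of_nat[simp]: "of_nat c \<in> poly_ring N"
  by (induction c) (simp_all add: poly_ring_add)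

lemma poly_ring_mono: "sp N u \<Longrightarrow> mono u \<in> poly_ring N"
  unfolding mono_def by (rule poly_ring_single)

lemma poly_ring_bin: "sp N u \<Longrightarrow> sp N v \<Longrightarrow> bin u v \<in> poly_ring N"
  unfolding bin_def by (intro poly_ring_diff poly_ring_mono)

lemma poly_ring_sum: "(\<And>i. i \<in> I \<Longrightarrow> f i \<in> poly_ring N) \<Longrightarrow> (\<Sum>i\<in>I. f i) \<in> poly_ring N"
  by (induction I rule: infinite_finite_induct) (simp_all add: poly_ring_add)

definition is_ideal :: "nat \<Rightarrow> 'k::field mpoly set \<Rightarrow> bool" where
  "is_ideal N J \<longleftrightarrow> J \<subseteq> poly_ring N \<and> 0 \<in> J \<and> (\<forall>a\<in>J. \<forall>b\<in>J. a + b \<in> J)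
     \<and> (\<forall>a\<in>J. \<forall>h\<in>poly_ring N. h * a \<in> J)"

lemma ideal_add: "is_ideal N J \<Longrightarrow> a \<in> J \<Longrightarrow> b \<in> J \<Longrightarrow> a + b \<in> J"
  unfolding is_ideal_def by blast

lemma ideal_mult: "is_ideal N J \<Longrightarrow> a \<in> J \<Longrightarrow> h \<in> poly_ring N \<Longrightarrow> h * a \<in> J"
  unfolding is_ideal_def by blast

lemma ideal_zero: "is_ideal N J \<Longrightarrow> 0 \<in> J"
  unfolding is_ideal_def by blast

lemma ideal_sub: "is_ideal N J \<Longrightarrow> a \<in> J \<Longrightarrow> a \<in> poly_ring N"
  unfolding is_ideal_def by blast

lemma ideal_uminus: "is_ideal N J \<Longrightarrow> a \<in> J \<Longrightarrow> - a \<in> J"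
  using ideal_mult[of N J a "- 1"] poly_ring_uminus[of 1 N] by simp

lemma ideal_diff: "is_ideal N J \<Longrightarrow> a \<in> J \<Longrightarrow> b \<in> J \<Longrightarrow> a - b \<in> J"
  using ideal_add[of N J a "- b"] ideal_uminus[of N J b] by simp

lemma ideal_sum: "is_ideal N J \<Longrightarrow> (\<And>i. i \<in> I \<Longrightarrow> f i \<in> J) \<Longrightarrow> (\<Sum>i\<in>I. f i) \<in> J"
  by (induction I rule: infinite_finite_induct) (simp_all add: ideal_zero ideal_add)

lemma toric_is_ideal: "is_ideal N (toric_ideal N m B :: 'k::field mpoly set)"
  unfolding is_ideal_def toric_phi
  by (auto simp: poly_ring_add poly_ring_mult phi_add phi_mult phi_zero)

lemma toric_radical:
  assumes "f \<in> poly_ring N" "f ^ e \<in> (toric_ideal N m B :: 'k::field mpoly set)"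
  shows "f \<in> toric_ideal N m B"
  using assms unfolding toric_phi by (auto simp: phi_power)

lemma ideal_sum_is_ideal:
  fixes I :: "nat \<Rightarrow> 'k::field mpoly set"
  assumes "\<And>i. i < r \<Longrightarrow> is_ideal N (I i)"
  shows "is_ideal N (ideal_sum r I)"
  unfolding is_ideal_def
proof (intro conjI ballI)
  show "ideal_sum r I \<subseteq> poly_ring N"
    unfolding ideal_sum_def using assms by (auto intro!: poly_ring_sum dest: ideal_sub)
  show "0 \<in> ideal_sum r I"
    unfolding ideal_sum_def using assms by (auto intro!: exI[of _ "\<lambda>i. 0"] ideal_zero)
next
  fix a b assume "a \<in> ideal_sum r I" "b \<in> ideal_sum r I"
  then obtain f g where "a = (\<Sum>i<r. f i)" "\<forall>i<r. f i \<in> I i" "b = (\<Sum>i<r. g i)" "\<forall>i<r. g i \<in> I i"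
    unfolding ideal_sum_def by blast
  then show "a + b \<in> ideal_sum r I"
    unfolding ideal_sum_def using assms
    by (auto intro!: exI[of _ "\<lambda>i. f i + g i"] ideal_add simp: sum.distrib)
next
  fix a h :: "'k mpoly" assume "a \<in> ideal_sum r I" "h \<in> poly_ring N"
  then obtain f where "a = (\<Sum>i<r. f i)" "\<forall>i<r. f i \<in> I i"
    unfolding ideal_sum_def by blast
  then show "h * a \<in> ideal_sum r I"
    unfolding ideal_sum_def using assms \<open>h \<in> poly_ring N\<close>
    by (auto intro!: exI[of _ "\<lambda>i. h * f i"] ideal_mult simp: sum_distrib_left)
qed

lemma ideal_sum_member:
  assumes "\<And>i. i < r \<Longrightarrow> is_ideal N (I i)" "j < r" "a \<in> I j"
  shows "a \<in> ideal_sum r I"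
  unfolding ideal_sum_def
proof (intro CollectI exI conjI)
  let ?f = "\<lambda>i. if i = j then a else 0"
  show "a = (\<Sum>i<r. ?f i)" using assms(2) by (simp add: sum.delta)
  show "\<forall>i<r. ?f i \<in> I i" using assms by (auto intro: ideal_zero)
qed

lemma radical_is_ideal:
  assumes J: "is_ideal N (J :: 'k::field mpoly set)"
  shows "is_ideal N (radical N J)"
  unfolding is_ideal_def
proof (intro conjI ballI)
  show "radical N J \<subseteq> poly_ring N" unfolding radical_def by auto
  show "0 \<in> radical N J" unfolding radical_def using ideal_zero[OF J]
    by (auto intro!: exI[of _ 1])
next
  fix f g :: "'k mpoly" assume f: "f \<in> radical N J" and g: "g \<in> radical N J"
  then obtain a b where fa: "f ^ a \<in> J" and gb: "g ^ b \<in> J" and fr: "f \<in> poly_ring N" and gr: "g \<in> poly_ring N"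
    unfolding radical_def by blast
  have "(f + g) ^ (a + b) = (\<Sum>k\<le>a + b. of_nat ((a + b) choose k) * f ^ k * g ^ (a + b - k))"
    by (rule binomial_ring)
  also have "\<dots> \<in> J"
  proof (rule ideal_sum[OF J])
    fix k assume "k \<in> {..a + b}"
    show "of_nat ((a + b) choose k) * f ^ k * g ^ (a + b - k) \<in> J"
    proof (cases "k \<ge> a")
      case True
      then have "of_nat ((a + b) choose k) * f ^ k * g ^ (a + b - k)
          = (of_nat ((a + b) choose k) * f ^ (k - a) * g ^ (a + b - k)) * f ^ a"
        by (simp add: power_add[symmetric] mult_ac)
      also have "\<dots> \<in> J"
        by (intro ideal_mult[OF J fa] poly_ring_mult poly_ring_power fr gr poly_ring_of_nat)
      finally show ?thesis .
    next
      case False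
      then have "a + b - k = (a + b - k - b) + b" by simp
      then have "g ^ (a + b - k) = g ^ (a + b - k - b) * g ^ b" by (metis power_add)
      then have "of_nat ((a + b) choose k) * f ^ k * g ^ (a + b - k)
          = (of_nat ((a + b) choose k) * f ^ k * g ^ (a + b - k - b)) * g ^ b"
        by (simp add: mult_ac)
      also have "\<dots> \<in> J"
        by (intro ideal_mult[OF J gb] poly_ring_mult poly_ring_power fr gr poly_ring_of_nat)
      finally show ?thesis .
    qed
  qed
  finally show "f + g \<in> radical N J"
    unfolding radical_def using fr gr by (auto intro: poly_ring_add)
next
  fix f h :: "'k mpoly" assume f: "f \<in> radical N J" and h: "h \<in> poly_ring N"
  then obtain a where fa: "f ^ a \<in> J" and fr: "f \<in> poly_ring N"
    unfolding radical_def by blast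
  have "(h * f) ^ a = h ^ a * f ^ a" by (simp add: power_mult_distrib)
  also have "\<dots> \<in> J" by (intro ideal_mult[OF J fa] poly_ring_power h)
  finally show "h * f \<in> radical N J"
    unfolding radical_def using fr h by (auto intro: poly_ring_mult)
qed

lemma subset_radical: "is_ideal N J \<Longrightarrow> J \<subseteq> radical N J"
  unfolding radical_def by (auto intro: ideal_sub intro!: exI[of _ 1])

lemma mono_add: "(mono (u + v) :: 'k::field mpoly) = mono u * mono v"
  unfolding mono_def by (simp add: mult_single)

lemma mono_zero: "(mono 0 :: 'k::field mpoly) = 1"
  unfolding mono_def by simp

lemma phi_bin: "phi N m B (bin u v :: 'k::field mpoly) = Poly_Mapping.single (dg N m B u) 1 - Poly_Mapping.single (dg N m B v) 1"
  unfolding bin_def mono_def by (simp add: phi_diff phi_single)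

lemma bin_in_toric:
  assumes "sp N u" "sp N v" "dg N m B u = dg N m B v"
  shows "(bin u v :: 'k::field mpoly) \<in> toric_ideal N m B"
  unfolding toric_phi using assms by (simp add: poly_ring_bin phi_bin)

lemma bin_not_in_toric:
  assumes "dg N m B u \<noteq> dg N m B v"
  shows "(bin u v :: 'k::field mpoly) \<notin> toric_ideal N m B"
proof
  assume "(bin u v :: 'k::field mpoly) \<in> toric_ideal N m B"
  then have "phi N m B (bin u v :: 'k mpoly) = 0" unfolding toric_phi by simp
  then have "pl (phi N m B (bin u v :: 'k mpoly)) (dg N m B u) = 0" by simp
  then show False using assms by (simp add: phi_bin lookup_single lookup_minus when_def)
qed

lemma bin_nonzero:
  assumes "u \<noteq> v"
  shows "(bin u v :: 'k::field mpoly) \<noteq> 0"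
proof
  assume "(bin u v :: 'k mpoly) = 0"
  then have "pl (bin u v :: 'k mpoly) u = 0" by simp
  then show False using assms by (simp add: bin_def mono_def lookup_minus lookup_single when_def)
qed

lemma toric_refine:
  assumes cls: "\<And>u v. sp N u \<Longrightarrow> sp N v \<Longrightarrow> dg N m' B' u = dg N m' B' v \<Longrightarrow> dg N m B u = dg N m B v"
    and p: "p \<in> (toric_ideal N m' B' :: 'k::field mpoly set)"
  shows "p \<in> toric_ideal N m B"
proof -
  have pr: "p \<in> poly_ring N" and p0: "phi N m' B' p = 0" using p unfolding toric_phi by auto
  have spk: "\<And>u. u \<in> pk p \<Longrightarrow> sp N u" using pr unfolding poly_ring_def sp_def by auto
  have "phi N m B p = 0"
  proof (rule poly_mapping_eqI)
    fix w
    let ?S = "{u \<in> pk p. dg N m B u = w}"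
    have "pl (phi N m B p) w = (\<Sum>u\<in>?S. pl p u)" by (rule lookup_phi)
    also have "\<dots> = (\<Sum>w'\<in>dg N m' B' ` ?S. \<Sum>u\<in>{u \<in> ?S. dg N m' B' u = w'}. pl p u)"
      by (rule sum.image_gen) simp
    also have "\<dots> = (\<Sum>w'\<in>dg N m' B' ` ?S. 0)"
    proof (rule sum.cong[OF refl])
      fix w' assume "w' \<in> dg N m' B' ` ?S"
      then obtain u0 where u0: "u0 \<in> ?S" "w' = dg N m' B' u0" by blast
      have "{u \<in> ?S. dg N m' B' u = w'} = {u \<in> pk p. dg N m' B' u = w'}"
        using u0 cls spk by auto
      then show "(\<Sum>u\<in>{u \<in> ?S. dg N m' B' u = w'}. pl p u) = 0"
        using lookup_phi[of N m' B' p w'] p0 by simp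
    qed
    finally show "pl (phi N m B p) w = pl 0 w" by simp
  qed
  then show ?thesis unfolding toric_phi using pr by simp
qed

definition conn :: "'k::field mpoly set \<Rightarrow> (nat \<Rightarrow>\<^sub>0 nat) \<Rightarrow> (nat \<Rightarrow>\<^sub>0 nat) \<Rightarrow> bool" where
  "conn J u v \<longleftrightarrow> bin u v \<in> J"

lemma conn_refl: "is_ideal N J \<Longrightarrow> conn J u u"
  unfolding conn_def bin_def by (simp add: ideal_zero)

lemma conn_sym: "is_ideal N J \<Longrightarrow> conn J u v \<Longrightarrow> conn J v u"
  unfolding conn_def using ideal_uminus[of N J "bin u v"] by (simp add: bin_def)

lemma conn_trans: "is_ideal N J \<Longrightarrow> conn J u v \<Longrightarrow> conn J v w \<Longrightarrow> conn J u w"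
  unfolding conn_def using ideal_add[of N J "bin u v" "bin v w"] by (simp add: bin_def)

lemma conn_shift: "is_ideal N J \<Longrightarrow> conn J u v \<Longrightarrow> sp N w \<Longrightarrow> conn J (w + u) (w + v)"
  unfolding conn_def using ideal_mult[of N J "bin u v" "mono w"] poly_ring_mono[of N w]
  by (simp add: bin_def mono_add right_diff_distrib)

lemma binom_power_lemma:
  assumes J: "is_ideal N J" and x: "x \<in> poly_ring N" and y: "y \<in> poly_ring N"
    and h1: "x ^ k1 * (x - y) \<in> J" and h2: "y ^ k2 * (x - y) \<in> J"
  shows "(x - y) ^ (k1 + k2 + 1) \<in> (J :: 'k::field mpoly set)"
proof -
  let ?n = "k1 + k2"
  have "(x - y) ^ (?n + 1) = (x + (- y)) ^ ?n * (x - y)" by simp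
  also have "\<dots> = (\<Sum>k\<le>?n. of_nat (?n choose k) * x ^ k * (- y) ^ (?n - k)) * (x - y)"
    by (subst binomial_ring) simp
  also have "\<dots> = (\<Sum>k\<le>?n. of_nat (?n choose k) * x ^ k * (- y) ^ (?n - k) * (x - y))"
    by (simp add: sum_distrib_right)
  also have "\<dots> \<in> J"
  proof (rule ideal_sum[OF J])
    fix k assume "k \<in> {..?n}"
    show "of_nat (?n choose k) * x ^ k * (- y) ^ (?n - k) * (x - y) \<in> J"
    proof (cases "k \<ge> k1")
      case True
      then have "of_nat (?n choose k) * x ^ k * (- y) ^ (?n - k) * (x - y)
          = (of_nat (?n choose k) * x ^ (k - k1) * (- y) ^ (?n - k)) * (x ^ k1 * (x - y))"
        by (simp add: power_add[symmetric] mult_ac)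
      also have "\<dots> \<in> J"
        by (intro ideal_mult[OF J h1] poly_ring_mult poly_ring_power x poly_ring_uminus y poly_ring_of_nat)
      finally show ?thesis .
    next
      case False
      then have "?n - k = (?n - k - k2) + k2" by simp
      then have "(- y) ^ (?n - k) = (- y) ^ (?n - k - k2) * ((- 1) ^ k2 * y ^ k2)"
        by (metis power_add power_minus)
      then have "of_nat (?n choose k) * x ^ k * (- y) ^ (?n - k) * (x - y)
          = (of_nat (?n choose k) * x ^ k * (- y) ^ (?n - k - k2) * (- 1) ^ k2) * (y ^ k2 * (x - y))"
        by (simp add: mult_ac)
      also have "\<dots> \<in> J"
        by (intro ideal_mult[OF J h2] poly_ring_mult poly_ring_power x poly_ring_uminus y poly_ring_of_nat poly_ring_one)
      finally show ?thesis .
    qed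
  qed
  finally show ?thesis by simp
qed

lemma toric_sub_ideal:
  assumes R: "is_ideal N (R :: 'k::field mpoly set)"
    and bins: "\<And>u v. sp N u \<Longrightarrow> sp N v \<Longrightarrow> dg N m B u = dg N m B v \<Longrightarrow> bin u v \<in> R"
    and p: "p \<in> toric_ideal N m B"
  shows "p \<in> R"
proof -
  have pr: "p \<in> poly_ring N" and p0: "phi N m B p = 0" using p unfolding toric_phi by auto
  have spk: "\<And>u. u \<in> pk p \<Longrightarrow> sp N u" using pr unfolding poly_ring_def sp_def by auto
  define r where "r u = (SOME v. v \<in> pk p \<and> dg N m B v = dg N m B u)" for u
  have r: "r u \<in> pk p \<and> dg N m B (r u) = dg N m B u" if "u \<in> pk p" for u
    unfolding r_def by (rule someI_ex) (use that in blast)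
  let ?c = "pl p"
  have Z: "(\<Sum>u\<in>pk p. Poly_Mapping.single (r u) (?c u)) = 0"
  proof (rule poly_mapping_eqI)
    fix v
    have "pl (\<Sum>u\<in>pk p. Poly_Mapping.single (r u) (?c u)) v = (\<Sum>u\<in>{u\<in>pk p. r u = v}. ?c u)"
      by (simp add: lookup_sum lookup_single when_def sum.inter_filter[symmetric])
    also have "\<dots> = 0"
    proof (cases "\<exists>u0\<in>pk p. r u0 = v")
      case True
      then obtain u0 where u0: "u0 \<in> pk p" "r u0 = v" by blast
      have "{u\<in>pk p. r u = v} = {u\<in>pk p. dg N m B u = dg N m B v}"
      proof (intro set_eqI iffI)
        fix u assume "u \<in> {u\<in>pk p. r u = v}"
        then show "u \<in> {u\<in>pk p. dg N m B u = dg N m B v}" using r by auto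
      next
        fix u assume u: "u \<in> {u\<in>pk p. dg N m B u = dg N m B v}"
        then have "dg N m B u = dg N m B u0" using r[OF u0(1)] u0 by simp
        then have "r u = r u0" unfolding r_def by simp
        then show "u \<in> {u\<in>pk p. r u = v}" using u u0 by simp
      qed
      then show ?thesis using lookup_phi[of N m B p "dg N m B v"] p0 by simp
    next
      case False
      then have e: "{u\<in>pk p. r u = v} = {}" by auto
      show ?thesis by (simp only: e) simp
    qed
    finally show "pl (\<Sum>u\<in>pk p. Poly_Mapping.single (r u) (?c u)) v = pl 0 v" by simp
  qed
  have "p = (\<Sum>u\<in>pk p. Poly_Mapping.single u (?c u)) - (\<Sum>u\<in>pk p. Poly_Mapping.single (r u) (?c u))"
    using Z poly_expand[of p] by simp
  also have "\<dots> = (\<Sum>u\<in>pk p. Poly_Mapping.single 0 (?c u) * bin u (r u))"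
    by (simp add: sum_subtractf[symmetric] bin_def mono_def right_diff_distrib mult_single)
  also have "\<dots> \<in> R"
  proof (rule ideal_sum[OF R])
    fix u assume u: "u \<in> pk p"
    show "Poly_Mapping.single 0 (?c u) * bin u (r u) \<in> R"
      by (intro ideal_mult[OF R] bins poly_ring_single) (use u r spk in auto)
  qed
  finally show ?thesis .
qed

lemma sp_iff: "sp N u \<longleftrightarrow> (\<forall>i\<ge>N. pl u i = 0)"
proof
  assume s: "sp N u"
  show "\<forall>i\<ge>N. pl u i = 0"
  proof (intro allI impI)
    fix i assume "N \<le> i"
    then have "i \<notin> pk u" using s unfolding sp_def using lessThan_iff not_le subsetD by metis
    then show "pl u i = 0" by (simp add: in_keys_iff)
  qed
next
  assume h: "\<forall>i\<ge>N. pl u i = 0"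
  show "sp N u" unfolding sp_def
  proof
    fix x assume "x \<in> pk u"
    then have "pl u x \<noteq> 0" by (simp add: in_keys_iff)
    then have "\<not> N \<le> x" using h by metis
    then show "x \<in> {..<N}" by simp
  qed
qed





locale cor =
  fixes n :: nat and d a1 a2 :: "nat \<Rightarrow> nat"
  assumes dpos: "\<forall>j<n. d j > 0"
    and a1nz: "\<exists>j<n. a1 j \<noteq> 0"
    and a2nz: "\<exists>j<n. a2 j \<noteq> 0"
begin

definition lam :: "int \<Rightarrow> int \<Rightarrow> bool" where
  "lam p q \<longleftrightarrow> (\<forall>j<n. int (d j) dvd p * int (a1 j) + q * int (a2 j))"

lemma lam_add: "lam p q \<Longrightarrow> lam p' q' \<Longrightarrow> lam (p + p') (q + q')"
  unfolding lam_def
proof (intro allI impI)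
  fix j assume h: "\<forall>j<n. int (d j) dvd p * int (a1 j) + q * int (a2 j)"
    "\<forall>j<n. int (d j) dvd p' * int (a1 j) + q' * int (a2 j)" "j < n"
  have e: "(p + p') * int (a1 j) + (q + q') * int (a2 j) = (p * int (a1 j) + q * int (a2 j)) + (p' * int (a1 j) + q' * int (a2 j))"
    by (simp add: algebra_simps)
  show "int (d j) dvd (p + p') * int (a1 j) + (q + q') * int (a2 j)"
    unfolding e by (rule dvd_add) (use h in auto)
qed

lemma lam_smult: "lam p q \<Longrightarrow> lam (c * p) (c * q)"
  unfolding lam_def
proof (intro allI impI)
  fix j assume "\<forall>j<n. int (d j) dvd p * int (a1 j) + q * int (a2 j)" "j < n"
  then have "int (d j) dvd c * (p * int (a1 j) + q * int (a2 j))" by simp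
  then show "int (d j) dvd c * p * int (a1 j) + c * q * int (a2 j)" by (simp add: algebra_simps)
qed

lemma lam_diff: "lam p q \<Longrightarrow> lam p' q' \<Longrightarrow> lam (p - c * p') (q - c * q')"
  using lam_add[of p q "(- c) * p'" "(- c) * q'"] lam_smult[of p' q' "- c"] by simp

definition DD :: nat where "DD = (\<Prod>j<n. d j)"

lemma DD_pos: "DD > 0"
  unfolding DD_def using dpos by (simp add: prod_pos)

lemma d_dvd_DD: "j < n \<Longrightarrow> d j dvd DD"
  unfolding DD_def by (simp add: dvd_prodI)

lemma lam_DD0: "lam (int DD) 0"
  unfolding lam_def using d_dvd_DD by (auto intro!: dvd_mult2 simp: int_dvd_int_iff)

lemma lam_0DD: "lam 0 (int DD)"
  unfolding lam_def using d_dvd_DD by (auto intro!: dvd_mult2 simp: int_dvd_int_iff)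

definition p0 :: nat where "p0 = (LEAST p. 0 < p \<and> lam (int p) 0)"
definition q0 :: nat where "q0 = (LEAST q. 0 < q \<and> lam 0 (int q))"
definition q1 :: nat where "q1 = (LEAST q. 0 < q \<and> (\<exists>p. lam p (int q)))"

lemma p0_prop: "0 < p0 \<and> lam (int p0) 0"
  unfolding p0_def by (rule LeastI[of _ DD]) (use DD_pos lam_DD0 in auto)

lemma q0_prop: "0 < q0 \<and> lam 0 (int q0)"
  unfolding q0_def by (rule LeastI[of _ DD]) (use DD_pos lam_0DD in auto)

lemma q1_prop: "0 < q1 \<and> (\<exists>p. lam p (int q1))"
  unfolding q1_def by (rule LeastI[of _ DD]) (use DD_pos lam_0DD in auto)

lemma p0_dvd: assumes "lam p 0" shows "int p0 dvd p"
proof -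
  have pp: "0 < p0" "lam (int p0) 0" using p0_prop by auto
  let ?r = "p mod int p0"
  have r: "?r = p - (p div int p0) * int p0" by (simp add: minus_div_mult_eq_mod)
  have "lam ?r 0" using lam_diff[OF assms pp(2), of "p div int p0"] r by simp
  moreover have "0 \<le> ?r" "?r < int p0" using pp by auto
  ultimately have "?r = 0"
  proof -
    assume l: "lam ?r 0" and "0 \<le> ?r" "?r < int p0"
    show "?r = 0"
    proof (rule ccontr)
      assume "?r \<noteq> 0"
      then have "0 < nat ?r \<and> lam (int (nat ?r)) 0" using l \<open>0 \<le> ?r\<close> by simp
      then have "p0 \<le> nat ?r" unfolding p0_def by (rule Least_le)
      then show False using \<open>?r < int p0\<close> \<open>0 \<le> ?r\<close> by (auto simp: le_nat_iff)
    qed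
  qed
  then show ?thesis by (simp add: dvd_eq_mod_eq_0)
qed

lemma q0_dvd: assumes "lam 0 q" shows "int q0 dvd q"
proof -
  have pp: "0 < q0" "lam 0 (int q0)" using q0_prop by auto
  let ?r = "q mod int q0"
  have r: "?r = q - (q div int q0) * int q0" by (simp add: minus_div_mult_eq_mod)
  have "lam 0 ?r" using lam_diff[OF assms pp(2), of "q div int q0"] r by simp
  moreover have "0 \<le> ?r" "?r < int q0" using pp by auto
  ultimately have "?r = 0"
  proof -
    assume l: "lam 0 ?r" and "0 \<le> ?r" "?r < int q0"
    show "?r = 0"
    proof (rule ccontr)
      assume "?r \<noteq> 0"
      then have "0 < nat ?r \<and> lam 0 (int (nat ?r))" using l \<open>0 \<le> ?r\<close> by simp
      then have "q0 \<le> nat ?r" unfolding q0_def by (rule Least_le)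
      then show False using \<open>?r < int q0\<close> \<open>0 \<le> ?r\<close> by (auto simp: le_nat_iff)
    qed
  qed
  then show ?thesis by (simp add: dvd_eq_mod_eq_0)
qed

lemma q1_dvd: assumes "lam p q" shows "int q1 dvd q"
proof -
  obtain p' where pp: "0 < q1" "lam p' (int q1)" using q1_prop by auto
  let ?r = "q mod int q1"
  have r: "?r = q - (q div int q1) * int q1" by (simp add: minus_div_mult_eq_mod)
  have l: "lam (p - (q div int q1) * p') ?r" using lam_diff[OF assms pp(2), of "q div int q1"] r by simp
  have "0 \<le> ?r" "?r < int q1" using pp by auto
  have "?r = 0"
  proof (rule ccontr)
    assume "?r \<noteq> 0"
    then have "0 < nat ?r \<and> (\<exists>p. lam p (int (nat ?r)))" using l \<open>0 \<le> ?r\<close> by auto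
    then have "q1 \<le> nat ?r" unfolding q1_def by (rule Least_le)
    then show False using \<open>?r < int q1\<close> \<open>0 \<le> ?r\<close> by (auto simp: le_nat_iff)
  qed
  then show ?thesis by (simp add: dvd_eq_mod_eq_0)
qed

definition p1 :: nat where "p1 = nat ((SOME p. lam p (int q1)) mod int p0)"

lemma p1_prop: "lam (int p1) (int q1)"
proof -
  let ?p = "SOME p. lam p (int q1)"
  have l: "lam ?p (int q1)" using q1_prop by (metis someI_ex)
  have pos: "0 < p0" "lam (int p0) 0" using p0_prop by auto
  have "int p1 = ?p mod int p0" unfolding p1_def using pos by simp
  also have "\<dots> = ?p - (?p div int p0) * int p0" by (simp add: minus_div_mult_eq_mod)
  finally have "int p1 = ?p - (?p div int p0) * int p0" .
  moreover have "lam (?p - (?p div int p0) * int p0) (int q1 - (?p div int p0) * 0)"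
    by (rule lam_diff[OF l pos(2)])
  ultimately show ?thesis by simp
qed

lemma lam_rep:
  assumes "lam p q"
  obtains k0 k2 where "p = k0 * int p0 + k2 * int p1" "q = k2 * int q1"
proof -
  obtain k2' where "q = int q1 * k2'" using q1_dvd[OF assms] by (rule dvdE)
  then have k2: "q = k2' * int q1" by (simp add: mult.commute)
  have "lam (p - k2' * int p1) (q - k2' * int q1)" by (rule lam_diff[OF assms p1_prop])
  then have "lam (p - k2' * int p1) 0" using k2 by simp
  then obtain k0 where "p - k2' * int p1 = int p0 * k0" using p0_dvd by (blast elim: dvdE)
  then show ?thesis using that[of k0 k2'] k2 by (simp add: algebra_simps)
qed

definition a :: "nat \<Rightarrow> nat" where "a j = (p0 * a1 j) div d j"
definition b :: "nat \<Rightarrow> nat" where "b j = (q0 * a2 j) div d j"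
definition c :: "nat \<Rightarrow> nat" where "c j = (p1 * a1 j + q1 * a2 j) div d j"

lemma lam_nat_dvd: "lam (int p) (int q) \<Longrightarrow> j < n \<Longrightarrow> d j dvd p * a1 j + q * a2 j"
  unfolding lam_def by (metis of_nat_add of_nat_mult int_dvd_int_iff)

lemma a_eq: "j < n \<Longrightarrow> d j * a j = p0 * a1 j"
  unfolding a_def using lam_nat_dvd[of p0 0 j] p0_prop by simp

lemma b_eq: "j < n \<Longrightarrow> d j * b j = q0 * a2 j"
  unfolding b_def using lam_nat_dvd[of 0 q0 j] q0_prop by simp

lemma c_eq: "j < n \<Longrightarrow> d j * c j = p1 * a1 j + q1 * a2 j"
  unfolding c_def using lam_nat_dvd[of p1 q1 j] p1_prop by simp

lemma a_pos: "j < n \<Longrightarrow> a1 j > 0 \<Longrightarrow> a j > 0"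
  using a_eq[of j] p0_prop by (metis mult_is_0 not_gr0)

lemma b_pos: "j < n \<Longrightarrow> a2 j > 0 \<Longrightarrow> b j > 0"
  using b_eq[of j] q0_prop by (metis mult_is_0 not_gr0)


definition mkv :: "(nat \<Rightarrow> nat) \<Rightarrow> (nat \<Rightarrow>\<^sub>0 nat)" where
  "mkv f = Abs_poly_mapping (\<lambda>i. if i < n + 2 then f i else 0)"

lemma lookup_mkv: "pl (mkv f) i = (if i < n + 2 then f i else 0)"
proof -
  have "finite {i. (if i < n + 2 then f i else 0) \<noteq> 0}"
    by (rule finite_subset[of _ "{..<n+2}"]) auto
  then show ?thesis unfolding mkv_def by simp
qed

lemma sp_mkv: "sp (n + 2) (mkv f)"
  unfolding sp_iff by (simp add: lookup_mkv)

primrec rep :: "nat \<Rightarrow> (nat \<Rightarrow>\<^sub>0 nat) \<Rightarrow> (nat \<Rightarrow>\<^sub>0 nat)" where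
  "rep 0 u = 0" | rep_Suc: "rep (Suc k) u = rep k u + u"

lemma lookup_rep: "pl (rep k u) i = k * pl u i"
  by (induction k) (simp_all add: lookup_add)

lemma sp_rep: "sp N u \<Longrightarrow> sp N (rep k u)"
  unfolding sp_iff by (simp add: lookup_rep)

lemma mono_rep: "(mono (rep k u) :: 'k::field mpoly) = mono u ^ k"
  by (induction k) (simp_all add: rep_Suc mono_add mono_zero)

definition P1 where "P1 = mkv (\<lambda>i. if i = n then p0 else 0)"
definition Q1 where "Q1 = mkv (\<lambda>i. if i < n then a i else 0)"
definition P2 where "P2 = mkv (\<lambda>i. if i = n + 1 then q0 else 0)"
definition Q2 where "Q2 = mkv (\<lambda>i. if i < n then b i else 0)"
definition P3 where "P3 = mkv (\<lambda>i. if i = n then p1 else if i = n + 1 then q1 else 0)"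
definition Q3 where "Q3 = mkv (\<lambda>i. if i < n then c i else 0)"

lemmas vec_defs = P1_def Q1_def P2_def Q2_def P3_def Q3_def

lemma sp_vecs: "sp (n+2) P1" "sp (n+2) Q1" "sp (n+2) P2" "sp (n+2) Q2" "sp (n+2) P3" "sp (n+2) Q3"
  unfolding vec_defs by (rule sp_mkv)+

lemma lookup_vecs:
  "pl P1 i = (if i = n then p0 else 0)"
  "pl Q1 i = (if i < n then a i else 0)"
  "pl P2 i = (if i = n + 1 then q0 else 0)"
  "pl Q2 i = (if i < n then b i else 0)"
  "pl P3 i = (if i = n then p1 else if i = n + 1 then q1 else 0)"
  "pl Q3 i = (if i < n then c i else 0)"
  unfolding vec_defs lookup_mkv by auto

abbreviation AA where "AA \<equiv> cor_cfg n d a1 a2"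

lemma cfgA: assumes "k < n"
  shows "cfg_deg (n + 2) AA u k = int (pl u k) * int (d k) + int (pl u n) * int (a1 k) + int (pl u (Suc n)) * int (a2 k)"
proof -
  have "cfg_deg (n + 2) AA u k = (\<Sum>j<n. int (pl u j) * AA j k) + int (pl u n) * AA n k + int (pl u (Suc n)) * AA (Suc n) k"
    unfolding cfg_deg_def by (simp add: numeral_2_eq_2)
  also have "(\<Sum>j<n. int (pl u j) * AA j k) = (\<Sum>j<n. if j = k then int (pl u k) * int (d k) else 0)"
    by (rule sum.cong) (auto simp: cor_cfg_def)
  also have "\<dots> = int (pl u k) * int (d k)" using assms by (simp add: sum.delta)
  finally show ?thesis by (simp add: cor_cfg_def)
qed

lemmas cfgA' = cfgA[unfolded add_2_eq_Suc']

lemma a_eq2: "j < n \<Longrightarrow> a1 j * p0 = d j * a j" using a_eq by (simp add: mult.commute)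
lemma b_eq2: "j < n \<Longrightarrow> a2 j * q0 = d j * b j" using b_eq by (simp add: mult.commute)
lemma c_eq2: "j < n \<Longrightarrow> a1 j * p1 + a2 j * q1 = d j * c j" using c_eq by (simp add: mult.commute)

lemma dgA_eq: "dg (n+2) n AA u = dg (n+2) n AA v \<longleftrightarrow>
   (\<forall>k<n. int (pl u k) * int (d k) + int (pl u n) * int (a1 k) + int (pl u (Suc n)) * int (a2 k)
        = int (pl v k) * int (d k) + int (pl v n) * int (a1 k) + int (pl v (Suc n)) * int (a2 k))"
  by (auto simp: poly_mapping_eq_iff fun_eq_iff lookup_dg cfgA cfgA')

lemma dgA_P1Q1: "dg (n+2) n AA P1 = dg (n+2) n AA Q1"
  unfolding dgA_eq
proof (intro allI impI)
  fix k assume k: "k < n"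
  have "int (d k) * int (a k) = int (d k * a k)" by simp
  also have "\<dots> = int (p0 * a1 k)" using a_eq[OF k] by simp
  finally have e: "int (d k) * int (a k) = int (p0 * a1 k)" .
  show "int (pl P1 k) * int (d k) + int (pl P1 n) * int (a1 k) + int (pl P1 (Suc n)) * int (a2 k) =
    int (pl Q1 k) * int (d k) + int (pl Q1 n) * int (a1 k) + int (pl Q1 (Suc n)) * int (a2 k)"
    using k e by (simp add: lookup_vecs mult.commute)
qed

lemma dgA_P2Q2: "dg (n+2) n AA P2 = dg (n+2) n AA Q2"
  unfolding dgA_eq
proof (intro allI impI)
  fix k assume k: "k < n"
  have "int (d k) * int (b k) = int (d k * b k)" by simp
  also have "\<dots> = int (q0 * a2 k)" using b_eq[OF k] by simp
  finally have e: "int (d k) * int (b k) = int (q0 * a2 k)" .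
  show "int (pl P2 k) * int (d k) + int (pl P2 n) * int (a1 k) + int (pl P2 (Suc n)) * int (a2 k) =
    int (pl Q2 k) * int (d k) + int (pl Q2 n) * int (a1 k) + int (pl Q2 (Suc n)) * int (a2 k)"
    using k e by (simp add: lookup_vecs mult.commute)
qed

lemma dgA_P3Q3: "dg (n+2) n AA P3 = dg (n+2) n AA Q3"
  unfolding dgA_eq
proof (intro allI impI)
  fix k assume k: "k < n"
  have "int (d k) * int (c k) = int (d k * c k)" by simp
  also have "\<dots> = int (p1 * a1 k + q1 * a2 k)" using c_eq[OF k] by simp
  finally have e: "int (d k) * int (c k) = int (p1 * a1 k + q1 * a2 k)" .
  show "int (pl P3 k) * int (d k) + int (pl P3 n) * int (a1 k) + int (pl P3 (Suc n)) * int (a2 k) =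
    int (pl Q3 k) * int (d k) + int (pl Q3 n) * int (a1 k) + int (pl Q3 (Suc n)) * int (a2 k)"
    using k e by (simp add: lookup_vecs mult.commute)
qed

end

locale corJ = cor +
  fixes J :: "'k::field mpoly set"
  assumes J: "is_ideal (n + 2) J"
    and g1: "bin P1 Q1 \<in> J" and g2: "bin P2 Q2 \<in> J" and g3: "bin P3 Q3 \<in> J"
begin

lemma conn_cong: "conn J u v \<Longrightarrow> u = u' \<Longrightarrow> v = v' \<Longrightarrow> conn J u' v'"
  by simp

lemma move_rep:
  assumes "conn J P Q" "sp (n+2) P" "sp (n+2) Q" "sp (n+2) Z"
  shows "conn J (Z + rep k P) (Z + rep k Q)"
proof (induction k)
  case 0
  show ?case using conn_refl[OF J] by simp
next
  case (Suc k)
  have s1: "conn J (P + (Z + rep k P)) (P + (Z + rep k Q))"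
    by (rule conn_shift[OF J Suc assms(2)])
  have s2: "conn J ((Z + rep k Q) + P) ((Z + rep k Q) + Q)"
    by (rule conn_shift[OF J assms(1)]) (intro sp_add sp_rep assms)
  have "conn J (P + (Z + rep k P)) ((Z + rep k Q) + Q)"
    by (rule conn_trans[OF J s1]) (rule conn_cong[OF s2]; simp add: add_ac)
  then show ?case by (rule conn_cong) (simp_all add: add_ac)
qed

lemma multi:
  assumes "sp (n+2) Z"
  shows "conn J (Z + rep c1 P1 + rep c2 P2 + rep c3 P3) (Z + rep c1 Q1 + rep c2 Q2 + rep c3 Q3)"
proof -
  have sZ: "sp (n+2) (Z + rep c2 P2 + rep c3 P3)" "sp (n+2) (Z + rep c1 Q1 + rep c3 P3)" "sp (n+2) (Z + rep c1 Q1 + rep c2 Q2)"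
    by (intro sp_add sp_rep sp_vecs assms)+
  have m1: "conn J ((Z + rep c2 P2 + rep c3 P3) + rep c1 P1) ((Z + rep c2 P2 + rep c3 P3) + rep c1 Q1)"
    by (rule move_rep) (use g1 sp_vecs sZ in \<open>simp_all add: conn_def\<close>)
  have m2: "conn J ((Z + rep c1 Q1 + rep c3 P3) + rep c2 P2) ((Z + rep c1 Q1 + rep c3 P3) + rep c2 Q2)"
    by (rule move_rep) (use g2 sp_vecs sZ in \<open>simp_all add: conn_def\<close>)
  have m3: "conn J ((Z + rep c1 Q1 + rep c2 Q2) + rep c3 P3) ((Z + rep c1 Q1 + rep c2 Q2) + rep c3 Q3)"
    by (rule move_rep) (use g3 sp_vecs sZ in \<open>simp_all add: conn_def\<close>)
  have x1: "conn J (Z + rep c1 P1 + rep c2 P2 + rep c3 P3) (Z + rep c1 Q1 + rep c2 P2 + rep c3 P3)"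
    by (rule conn_cong[OF m1]) (simp_all add: add_ac)
  have x2: "conn J (Z + rep c1 Q1 + rep c2 P2 + rep c3 P3) (Z + rep c1 Q1 + rep c2 Q2 + rep c3 P3)"
    by (rule conn_cong[OF m2]) (simp_all add: add_ac)
  have x3: "conn J (Z + rep c1 Q1 + rep c2 Q2 + rep c3 P3) (Z + rep c1 Q1 + rep c2 Q2 + rep c3 Q3)"
    by (rule conn_cong[OF m3]) (simp_all add: add_ac)
  show ?thesis by (rule conn_trans[OF J x1 conn_trans[OF J x2 x3]])
qed


lemma TP:
  assumes sX: "sp (n+2) X" and sY: "sp (n+2) Y"
    and hx: "\<forall>j<n. int (pl X j) = int (pl Y j) + (int Ta - int ca) * int (a j) + (int Tb - int cb) * int (b j) + (int ss - int rr) * int (c j)"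
    and hy: "int (pl X n) = int (pl Y n) + (int ca - int Ta) * int p0 + (int rr - int ss) * int p1"
    and hz: "int (pl X (Suc n)) = int (pl Y (Suc n)) + (int cb - int Tb) * int q0 + (int rr - int ss) * int q1"
    and cy: "Ta * p0 + ss * p1 \<le> pl Y n" and cz: "Tb * q0 + ss * q1 \<le> pl Y (Suc n)"
  shows "conn J Y X"
proof -
  define R0 where "R0 = rep Ta P1 + rep Tb P2 + rep ss P3"
  define R0' where "R0' = rep Ta Q1 + rep Tb Q2 + rep ss Q3"
  define R1 where "R1 = rep ca Q1 + rep cb Q2 + rep rr Q3"
  define R1' where "R1' = rep ca P1 + rep cb P2 + rep rr P3"
  have lR0: "pl R0 i = (if i = n then Ta * p0 + ss * p1 else if i = Suc n then Tb * q0 + ss * q1 else 0)" for i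
    unfolding R0_def by (simp add: lookup_add lookup_rep lookup_vecs)
  have lR0': "pl R0' i = (if i < n then Ta * a i + Tb * b i + ss * c i else 0)" for i
    unfolding R0'_def by (simp add: lookup_add lookup_rep lookup_vecs)
  have lR1: "pl R1 i = (if i < n then ca * a i + cb * b i + rr * c i else 0)" for i
    unfolding R1_def by (simp add: lookup_add lookup_rep lookup_vecs)
  have lR1': "pl R1' i = (if i = n then ca * p0 + rr * p1 else if i = Suc n then cb * q0 + rr * q1 else 0)" for i
    unfolding R1'_def by (simp add: lookup_add lookup_rep lookup_vecs)
  have Xz: "pl X i = 0" "pl Y i = 0" if "i \<ge> n + 2" for i
    using sX sY that unfolding sp_iff by auto
  define Z0 where "Z0 = Y - R0"
  have lZ0: "pl Z0 i = pl Y i - pl R0 i" for i unfolding Z0_def by (simp add: lookup_minus)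
  have Y0: "Y = Z0 + R0"
  proof (rule poly_mapping_eqI)
    fix i
    have "pl R0 i \<le> pl Y i" using cy cz by (simp add: lR0)
    then show "pl Y i = pl (Z0 + R0) i" by (simp add: lookup_add lZ0)
  qed
  have sZ0: "sp (n+2) Z0" unfolding sp_iff
  proof (intro allI impI)
    fix i assume "n + 2 \<le> i"
    then show "pl Z0 i = 0" using Xz[of i] by (simp add: lZ0)
  qed
  define Y1 where "Y1 = Z0 + R0'"
  have cb': "conn J Y Y1"
    unfolding Y1_def R0'_def by (subst Y0, unfold R0_def) (rule conn_cong[OF multi[OF sZ0]]; simp add: add_ac)
  have key: "pl Y j + Ta * a j + Tb * b j + ss * c j = pl X j + (ca * a j + cb * b j + rr * c j)" if j: "j < n" for j
  proof -
    have "int (pl Y j + Ta * a j + Tb * b j + ss * c j) = int (pl X j + (ca * a j + cb * b j + rr * c j))"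
      using hx j by (simp add: algebra_simps)
    then show ?thesis by (simp only: of_nat_eq_iff)
  qed
  have lY1: "pl Y1 i = pl Y i - pl R0 i + pl R0' i" for i
    unfolding Y1_def by (simp add: lookup_add lZ0)
  define Z1 where "Z1 = Y1 - R1"
  have lZ1: "pl Z1 i = pl Y1 i - pl R1 i" for i unfolding Z1_def by (simp add: lookup_minus)
  have Y1eq: "Y1 = Z1 + R1"
  proof (rule poly_mapping_eqI)
    fix i
    have "pl R1 i \<le> pl Y1 i"
    proof (cases "i < n")
      case True
      then show ?thesis using key[OF True] by (simp add: lR1 lY1 lR0 lR0')
    next
      case False
      then show ?thesis by (simp add: lR1)
    qed
    then show "pl Y1 i = pl (Z1 + R1) i" by (simp add: lookup_add lZ1)
  qed
  have sZ1: "sp (n+2) Z1" unfolding sp_iff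
  proof (intro allI impI)
    fix i assume "n + 2 \<le> i"
    then show "pl Z1 i = 0" using Xz[of i] by (simp add: lZ1 lY1 lR0 lR0' lR1)
  qed
  have Xeq: "X = Z1 + R1'"
  proof (rule poly_mapping_eqI)
    fix i
    show "pl X i = pl (Z1 + R1') i"
    proof (cases "i < n")
      case True
      then show ?thesis using key[OF True] by (simp add: lookup_add lZ1 lY1 lR0 lR0' lR1 lR1')
    next
      case False
      note F = False
      show ?thesis
      proof (cases "i = n")
        case True
        have "int (pl X n) = int (pl Y n - (Ta * p0 + ss * p1) + (ca * p0 + rr * p1))"
          using hy cy by (simp add: algebra_simps of_nat_diff)
        then have "pl X n = pl Y n - (Ta * p0 + ss * p1) + (ca * p0 + rr * p1)" by (simp only: of_nat_eq_iff)
        then show ?thesis using True by (simp add: lookup_add lZ1 lY1 lR0 lR0' lR1 lR1')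
      next
        case False
        note F2 = False
        show ?thesis
        proof (cases "i = Suc n")
          case True
          have "int (pl X (Suc n)) = int (pl Y (Suc n) - (Tb * q0 + ss * q1) + (cb * q0 + rr * q1))"
            using hz cz by (simp add: algebra_simps of_nat_diff)
          then have "pl X (Suc n) = pl Y (Suc n) - (Tb * q0 + ss * q1) + (cb * q0 + rr * q1)" by (simp only: of_nat_eq_iff)
          then show ?thesis using True by (simp add: lookup_add lZ1 lY1 lR0 lR0' lR1 lR1')
        next
          case False
          then have "n + 2 \<le> i" using F F2 by simp
          then show ?thesis using Xz[of i] F F2 False by (simp add: lookup_add lZ1 lY1 lR0 lR0' lR1 lR1')
        qed
      qed
    qed
  qed
  have c2': "conn J Y1 X"
    by (subst Y1eq, subst Xeq, unfold R1_def R1'_def) (rule conn_cong[OF conn_sym[OF J multi[OF sZ1]]]; simp add: add_ac)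
  show ?thesis by (rule conn_trans[OF J cb' c2'])
qed


lemma deg_int:
  assumes "dg (n+2) n AA U = dg (n+2) n AA V" "j < n"
  shows "int (d j) * (int (pl U j) - int (pl V j)) = - ((int (pl U n) - int (pl V n)) * int (a1 j) + (int (pl U (Suc n)) - int (pl V (Suc n))) * int (a2 j))"
  using assms unfolding dgA_eq by (auto simp: algebra_simps)

lemma cancel_d: "j < n \<Longrightarrow> int (d j) * x = int (d j) * y \<Longrightarrow> x = y"
  using dpos by auto

lemma conn_notRy:
  assumes sU: "sp (n+2) U" and sV: "sp (n+2) V" and deg: "dg (n+2) n AA U = dg (n+2) n AA V"
    and nR: "pl U n = 0" "j0 < n" "a1 j0 > 0" "pl U j0 = 0" "\<not> (pl U (Suc n) > 0 \<and> a2 j0 > 0)"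
  shows "conn J V U"
proof -
  have "int (d j0) * (int (pl U j0) - int (pl V j0)) = - ((int (pl U n) - int (pl V n)) * int (a1 j0) + (int (pl U (Suc n)) - int (pl V (Suc n))) * int (a2 j0))"
    by (rule deg_int[OF deg nR(2)])
  then have "int (d j0) * int (pl V j0) + int (pl V n) * int (a1 j0) + int (pl V (Suc n)) * int (a2 j0) = 0"
    using nR by (auto simp: algebra_simps)
  then have "int (pl V n) * int (a1 j0) = 0"
    by (smt (verit) mult_nonneg_nonneg of_nat_0_le_iff)
  then have Vn: "pl V n = 0" using nR by simp
  let ?q = "int (pl U (Suc n)) - int (pl V (Suc n))"
  have "lam 0 ?q" unfolding lam_def
  proof (intro allI impI)
    fix j assume j: "j < n"
    have "int (d j) * (int (pl V j) - int (pl U j)) = 0 * int (a1 j) + ?q * int (a2 j)"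
      using deg_int[OF deg j] nR Vn by (simp add: algebra_simps)
    then show "int (d j) dvd 0 * int (a1 j) + ?q * int (a2 j)" by (metis dvd_triv_left)
  qed
  then obtain k1 where k1: "?q = int q0 * k1" using q0_dvd by (blast elim: dvdE)
  define T1 where "T1 = nat (max 0 (- k1))"
  define c1 where "c1 = nat (max 0 k1)"
  have Tc: "int T1 - int c1 = - k1" unfolding T1_def c1_def by simp
  show ?thesis
  proof (rule TP[OF sU sV, where Ta = 0 and ca = 0 and ss = 0 and rr = 0 and Tb = T1 and cb = c1])
    show "\<forall>j<n. int (pl U j) = int (pl V j) + (int 0 - int 0) * int (a j) + (int T1 - int c1) * int (b j) + (int 0 - int 0) * int (c j)"
    proof (intro allI impI)
      fix j assume j: "j < n"
      have "int (d j) * (int (pl U j) - int (pl V j)) = int (d j) * (- k1 * int (b j))"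
      proof -
        have "int (d j) * int (b j) = int q0 * int (a2 j)" using b_eq[OF j] by (metis of_nat_mult)
        then show ?thesis using deg_int[OF deg j] nR Vn k1 by (simp add: algebra_simps)
      qed
      then have "int (pl U j) - int (pl V j) = - k1 * int (b j)" by (rule cancel_d[OF j])
      moreover have e: "(int T1 - int c1) * int (b j) = - k1 * int (b j)" using Tc by simp
      ultimately show "int (pl U j) = int (pl V j) + (int 0 - int 0) * int (a j) + (int T1 - int c1) * int (b j) + (int 0 - int 0) * int (c j)"
        by (simp add: e algebra_simps)
    qed
    show "int (pl U n) = int (pl V n) + (int 0 - int 0) * int p0 + (int 0 - int 0) * int p1"
      using nR Vn by simp
    show "int (pl U (Suc n)) = int (pl V (Suc n)) + (int c1 - int T1) * int q0 + (int 0 - int 0) * int q1"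
    proof -
      have "int c1 - int T1 = k1" by (metis Tc minus_diff_eq minus_minus)
      then show ?thesis using k1 by (simp add: algebra_simps)
    qed
    show "0 * p0 + 0 * p1 \<le> pl V n" by simp
    show "T1 * q0 + 0 * q1 \<le> pl V (Suc n)"
    proof -
      have "int (T1 * q0) \<le> int (pl V (Suc n))"
        unfolding T1_def using k1 by (cases "k1 \<le> 0") (auto simp: algebra_simps)
      then show ?thesis by (simp only: of_nat_le_iff)
    qed
  qed
qed


lemma conn_notRz:
  assumes sU: "sp (n+2) U" and sV: "sp (n+2) V" and deg: "dg (n+2) n AA U = dg (n+2) n AA V"
    and nR: "pl U (Suc n) = 0" "j0 < n" "a2 j0 > 0" "pl U j0 = 0" "\<not> (pl U n > 0 \<and> a1 j0 > 0)"
  shows "conn J V U"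
proof -
  have "int (d j0) * (int (pl U j0) - int (pl V j0)) = - ((int (pl U n) - int (pl V n)) * int (a1 j0) + (int (pl U (Suc n)) - int (pl V (Suc n))) * int (a2 j0))"
    by (rule deg_int[OF deg nR(2)])
  then have "int (d j0) * int (pl V j0) + int (pl V n) * int (a1 j0) + int (pl V (Suc n)) * int (a2 j0) = 0"
    using nR by (auto simp: algebra_simps)
  then have "int (pl V (Suc n)) * int (a2 j0) = 0"
    by (smt (verit) mult_nonneg_nonneg of_nat_0_le_iff)
  then have Vn: "pl V (Suc n) = 0" using nR by simp
  let ?p = "int (pl U n) - int (pl V n)"
  have "lam ?p 0" unfolding lam_def
  proof (intro allI impI)
    fix j assume j: "j < n"
    have "int (d j) * (int (pl V j) - int (pl U j)) = ?p * int (a1 j) + 0 * int (a2 j)"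
      using deg_int[OF deg j] nR Vn by (simp add: algebra_simps)
    then show "int (d j) dvd ?p * int (a1 j) + 0 * int (a2 j)" by (metis dvd_triv_left)
  qed
  then obtain k0 where k0: "?p = int p0 * k0" using p0_dvd by (blast elim: dvdE)
  define T0 where "T0 = nat (max 0 (- k0))"
  define c0 where "c0 = nat (max 0 k0)"
  have Tc: "int T0 - int c0 = - k0" unfolding T0_def c0_def by simp
  show ?thesis
  proof (rule TP[OF sU sV, where Ta = T0 and ca = c0 and ss = 0 and rr = 0 and Tb = 0 and cb = 0])
    show "\<forall>j<n. int (pl U j) = int (pl V j) + (int T0 - int c0) * int (a j) + (int 0 - int 0) * int (b j) + (int 0 - int 0) * int (c j)"
    proof (intro allI impI)
      fix j assume j: "j < n"
      have "int (d j) * (int (pl U j) - int (pl V j)) = int (d j) * (- k0 * int (a j))"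
      proof -
        have "int (d j) * int (a j) = int p0 * int (a1 j)" using a_eq[OF j] by (metis of_nat_mult)
        then show ?thesis using deg_int[OF deg j] nR Vn k0 by (simp add: algebra_simps)
      qed
      then have "int (pl U j) - int (pl V j) = - k0 * int (a j)" by (rule cancel_d[OF j])
      moreover have e: "(int T0 - int c0) * int (a j) = - k0 * int (a j)" using Tc by simp
      ultimately show "int (pl U j) = int (pl V j) + (int T0 - int c0) * int (a j) + (int 0 - int 0) * int (b j) + (int 0 - int 0) * int (c j)"
        by (simp add: e algebra_simps)
    qed
    show "int (pl U n) = int (pl V n) + (int c0 - int T0) * int p0 + (int 0 - int 0) * int p1"
    proof -
      have "int c0 - int T0 = k0" by (metis Tc minus_diff_eq minus_minus)
      then show ?thesis using k0 by (simp add: algebra_simps)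
    qed
    show "int (pl U (Suc n)) = int (pl V (Suc n)) + (int 0 - int 0) * int q0 + (int 0 - int 0) * int q1"
      using nR Vn by simp
    show "0 * q0 + 0 * q1 \<le> pl V (Suc n)" by simp
    show "T0 * p0 + 0 * p1 \<le> pl V n"
    proof -
      have "int (T0 * p0) \<le> int (pl V n)"
        unfolding T0_def using k0 by (cases "k0 \<le> 0") (auto simp: algebra_simps)
      then show ?thesis by (simp only: of_nat_le_iff)
    qed
  qed
qed


lemma a_zero: assumes "j < n" "a1 j = 0" shows "a j = 0"
proof -
  have "d j > 0" using dpos assms by simp
  moreover have "d j * a j = 0" using a_eq[OF assms(1)] assms by simp
  ultimately show ?thesis by simp
qed

lemma b_zero: assumes "j < n" "a2 j = 0" shows "b j = 0"
proof -
  have "d j > 0" using dpos assms by simp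
  moreover have "d j * b j = 0" using b_eq[OF assms(1)] assms by simp
  ultimately show ?thesis by simp
qed

lemma conn_rich:
  assumes sU: "sp (n+2) U" and sV: "sp (n+2) V" and deg: "dg (n+2) n AA U = dg (n+2) n AA V"
    and Ry: "\<forall>j<n. a1 j > 0 \<longrightarrow> pl U n > 0 \<or> pl U j > 0 \<or> (pl U (Suc n) > 0 \<and> a2 j > 0)"
    and Rz: "\<forall>j<n. a2 j > 0 \<longrightarrow> pl U (Suc n) > 0 \<or> pl U j > 0 \<or> (pl U n > 0 \<and> a1 j > 0)"
  shows "\<exists>K. conn J (rep K U + V) (rep K U + U)"
proof -
  let ?p = "int (pl U n) - int (pl V n)"
  let ?q = "int (pl U (Suc n)) - int (pl V (Suc n))"
  have "lam ?p ?q" unfolding lam_def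
  proof (intro allI impI)
    fix j assume j: "j < n"
    have "int (d j) * (int (pl V j) - int (pl U j)) = ?p * int (a1 j) + ?q * int (a2 j)"
      using deg_int[OF deg j] by (simp add: algebra_simps)
    then show "int (d j) dvd ?p * int (a1 j) + ?q * int (a2 j)" by (metis dvd_triv_left)
  qed
  then obtain k0 k2 where kk: "?p = k0 * int p0 + k2 * int p1" "?q = k2 * int q1" by (rule lam_rep)
  define T0 where "T0 = nat (max 0 (- k0))"
  define c0 where "c0 = nat (max 0 k0)"
  define s where "s = nat (max 0 (- k2))"
  define r where "r = nat (max 0 k2)"
  have Tc0: "int T0 - int c0 = - k0" "int c0 - int T0 = k0" unfolding T0_def c0_def by simp_all
  have sr: "int s - int r = - k2" "int r - int s = k2" unfolding s_def r_def by simp_all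
  define t where "t = T0 * p0 + s * p1 + s * q1"
  define S where "S = (\<Sum>j<n. a j + b j)"
  define K where "K = p0 * q0 * (t * S + 1)"
  define cA where "cA = (K * pl U n) div p0"
  define cB where "cB = (K * pl U (Suc n)) div q0"
  have pq0: "p0 > 0" "q0 > 0" using p0_prop q0_prop by auto
  have cAle: "cA * p0 \<le> K * pl U n" unfolding cA_def by simp
  have cBle: "cB * q0 \<le> K * pl U (Suc n)" unfolding cB_def by simp
  have key: "t * (a j + b j) \<le> K * pl U j + cA * a j + cB * b j" if j: "j < n" for j
  proof (cases "a j + b j = 0")
    case True then show ?thesis by simp
  next
    case False
    have abS: "a j + b j \<le> S" unfolding S_def using j by (intro member_le_sum) auto
    then have tS: "t * (a j + b j) \<le> t * S" by simp
    have Kbig: "t * S < K"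
    proof -
      have "1 \<le> p0 * q0" using pq0 by simp
      then have "1 * (t * S + 1) \<le> p0 * q0 * (t * S + 1)" by (rule mult_le_mono1)
      then show ?thesis unfolding K_def by simp
    qed
    have KdA: "K div p0 = q0 * (t * S + 1)" unfolding K_def using pq0 by simp
    have KdB: "K div q0 = p0 * (t * S + 1)" unfolding K_def using pq0 by simp
    have a12: "a1 j > 0 \<or> a2 j > 0"
    proof (rule ccontr)
      assume "\<not> (a1 j > 0 \<or> a2 j > 0)"
      then have "a1 j = 0" "a2 j = 0" by simp_all
      then have "a j = 0" "b j = 0" using a_zero[OF j] b_zero[OF j] by simp_all
      then show False using False by simp
    qed
    have h1: "t * S \<le> q0 * (t * S + 1)"
    proof -
      have "1 * (t * S + 1) \<le> q0 * (t * S + 1)" using pq0 by (intro mult_le_mono1) simp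
      then show ?thesis by simp
    qed
    have h2: "t * S \<le> p0 * (t * S + 1)"
    proof -
      have "1 * (t * S + 1) \<le> p0 * (t * S + 1)" using pq0 by (intro mult_le_mono1) simp
      then show ?thesis by simp
    qed
    have cases: "pl U j > 0 \<or> (pl U n > 0 \<and> a1 j > 0) \<or> (pl U (Suc n) > 0 \<and> a2 j > 0)"
    proof (cases "a1 j > 0")
      case True
      then have "pl U n > 0 \<or> pl U j > 0 \<or> (pl U (Suc n) > 0 \<and> a2 j > 0)" using Ry j by simp
      then show ?thesis using True by (elim disjE conjE; simp)
    next
      case False
      then have "a2 j > 0" using a12 by simp
      then have "pl U (Suc n) > 0 \<or> pl U j > 0 \<or> (pl U n > 0 \<and> a1 j > 0)" using Rz j by simp
      then show ?thesis using \<open>a2 j > 0\<close> by (elim disjE conjE; simp)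
    qed
    show ?thesis
    proof -
      consider (u) "pl U j > 0" | (y) "pl U n > 0" "a1 j > 0" | (z) "pl U (Suc n) > 0" "a2 j > 0"
        using cases by (elim disjE conjE; simp)
      then show ?thesis
      proof cases
        case u
        have "K * 1 \<le> K * pl U j" using u by (intro mult_le_mono2) simp
        then show ?thesis using tS Kbig by linarith
      next
        case y
        have "K div p0 \<le> cA" unfolding cA_def using y by (intro div_le_mono) simp
        then have tc: "t * S \<le> cA" using KdA h1 by linarith
        have "cA * 1 \<le> cA * a j" using a_pos[OF j y(2)] by (intro mult_le_mono2) simp
        then show ?thesis using tS tc by linarith
      next
        case z
        have "K div q0 \<le> cB" unfolding cB_def using z by (intro div_le_mono) simp
        then have tc: "t * S \<le> cB" using KdB h2 by linarith
        have "cB * 1 \<le> cB * b j" using b_pos[OF j z(2)] by (intro mult_le_mono2) simp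
        then show ?thesis using tS tc by linarith
      qed
    qed
  qed
  define M' where "M' = mkv (\<lambda>i. if i < n then K * pl U i + cA * a i + cB * b i - t * (a i + b i)
     else if i = n then K * pl U n - cA * p0 + t * p0
     else if i = Suc n then K * pl U (Suc n) - cB * q0 + t * q0 else 0)"
  have lMx: "pl M' j = K * pl U j + cA * a j + cB * b j - t * (a j + b j)" if "j < n" for j
    unfolding M'_def lookup_mkv using that by simp
  have lMy: "pl M' n = K * pl U n - cA * p0 + t * p0"
    unfolding M'_def lookup_mkv by simp
  have lMz: "pl M' (Suc n) = K * pl U (Suc n) - cB * q0 + t * q0"
    unfolding M'_def lookup_mkv by simp
  have sM: "sp (n+2) M'" unfolding M'_def by (rule sp_mkv)
  have tp1: "conn J (rep K U + E) (M' + E)" if sE: "sp (n+2) E" for E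
  proof (rule TP[where Ta = cA and ca = t and Tb = cB and cb = t and ss = 0 and rr = 0])
    show "sp (n + 2) (M' + E)" by (intro sp_add sM sE)
    show "sp (n + 2) (rep K U + E)" by (intro sp_add sp_rep sU sE)
    show "\<forall>j<n. int (pl (M' + E) j) = int (pl (rep K U + E) j) + (int cA - int t) * int (a j) + (int cB - int t) * int (b j) + (int 0 - int 0) * int (c j)"
    proof (intro allI impI)
      fix j assume j: "j < n"
      have "int (pl M' j) = int (K * pl U j + cA * a j + cB * b j) - int (t * (a j + b j))"
        using lMx[OF j] key[OF j] by (simp add: of_nat_diff)
      then show "int (pl (M' + E) j) = int (pl (rep K U + E) j) + (int cA - int t) * int (a j) + (int cB - int t) * int (b j) + (int 0 - int 0) * int (c j)"
        by (simp add: lookup_add lookup_rep algebra_simps)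
    qed
    show "int (pl (M' + E) n) = int (pl (rep K U + E) n) + (int t - int cA) * int p0 + (int 0 - int 0) * int p1"
    proof -
      have "int (pl M' n) = int (K * pl U n) - int (cA * p0) + int (t * p0)"
        using lMy cAle by (simp add: of_nat_diff)
      then show ?thesis by (simp add: lookup_add lookup_rep algebra_simps)
    qed
    show "int (pl (M' + E) (Suc n)) = int (pl (rep K U + E) (Suc n)) + (int t - int cB) * int q0 + (int 0 - int 0) * int q1"
    proof -
      have "int (pl M' (Suc n)) = int (K * pl U (Suc n)) - int (cB * q0) + int (t * q0)"
        using lMz cBle by (simp add: of_nat_diff)
      then show ?thesis by (simp add: lookup_add lookup_rep algebra_simps)
    qed
    show "cA * p0 + 0 * p1 \<le> pl (rep K U + E) n"
      using cAle by (simp add: lookup_add lookup_rep)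
    show "cB * q0 + 0 * q1 \<le> pl (rep K U + E) (Suc n)"
      using cBle by (simp add: lookup_add lookup_rep)
  qed
  have tp2: "conn J (M' + V) (M' + U)"
  proof (rule TP[where Ta = T0 and ca = c0 and Tb = 0 and cb = 0 and ss = s and rr = r])
    show "sp (n + 2) (M' + U)" by (intro sp_add sM sU)
    show "sp (n + 2) (M' + V)" by (intro sp_add sM sV)
    show "\<forall>j<n. int (pl (M' + U) j) = int (pl (M' + V) j) + (int T0 - int c0) * int (a j) + (int 0 - int 0) * int (b j) + (int s - int r) * int (c j)"
    proof (intro allI impI)
      fix j assume j: "j < n"
      have ea: "int (d j) * int (a j) = int p0 * int (a1 j)" using a_eq[OF j] by (metis of_nat_mult)
      have ec: "int (d j) * int (c j) = int p1 * int (a1 j) + int q1 * int (a2 j)" using c_eq[OF j] by (metis of_nat_mult of_nat_add)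
      have "int (d j) * (int (pl U j) - int (pl V j)) = int (d j) * (- k0 * int (a j) - k2 * int (c j))"
      proof -
        have "int (d j) * (- k0 * int (a j) - k2 * int (c j)) = - k0 * (int (d j) * int (a j)) - k2 * (int (d j) * int (c j))"
          by (simp add: algebra_simps)
        also have "\<dots> = - (?p * int (a1 j) + ?q * int (a2 j))"
          unfolding ea ec kk by (simp add: algebra_simps)
        finally show ?thesis using deg_int[OF deg j] by simp
      qed
      then have e1: "int (pl U j) - int (pl V j) = - k0 * int (a j) - k2 * int (c j)" by (rule cancel_d[OF j])
      have e2: "(int T0 - int c0) * int (a j) = - k0 * int (a j)" using Tc0(1) by simp
      have e3: "(int s - int r) * int (c j) = - k2 * int (c j)" using sr(1) by simp
      show "int (pl (M' + U) j) = int (pl (M' + V) j) + (int T0 - int c0) * int (a j) + (int 0 - int 0) * int (b j) + (int s - int r) * int (c j)"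
        using e1 unfolding e2 e3 by (simp add: lookup_add algebra_simps)
    qed
    show "int (pl (M' + U) n) = int (pl (M' + V) n) + (int c0 - int T0) * int p0 + (int r - int s) * int p1"
      using kk(1) by (simp add: Tc0 sr lookup_add algebra_simps)
    show "int (pl (M' + U) (Suc n)) = int (pl (M' + V) (Suc n)) + (int 0 - int 0) * int q0 + (int r - int s) * int q1"
      using kk(2) by (simp add: sr lookup_add algebra_simps)
    have tp: "t \<le> t * p0" "t \<le> t * q0" using pq0 by simp_all
    have m1: "t * p0 \<le> pl M' n" using lMy cAle by simp
    have m2: "t * q0 \<le> pl M' (Suc n)" using lMz cBle by simp
    have t1: "T0 * p0 + s * p1 \<le> t" "s * q1 \<le> t" unfolding t_def by simp_all
    show "T0 * p0 + s * p1 \<le> pl (M' + V) n"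
      using m1 tp t1 unfolding lookup_add by linarith
    show "0 * q0 + s * q1 \<le> pl (M' + V) (Suc n)"
      using m2 tp t1 unfolding lookup_add by linarith
  qed
  have "conn J (rep K U + V) (rep K U + U)"
    by (rule conn_trans[OF J tp1[OF sV] conn_trans[OF J tp2 conn_sym[OF J tp1[OF sU]]]])
  then show ?thesis by (rule exI)
qed


lemma main_conn:
  assumes sU: "sp (n+2) U" and sV: "sp (n+2) V" and deg: "dg (n+2) n AA U = dg (n+2) n AA V"
  shows "\<exists>K. conn J (rep K U + V) (rep K U + U)"
proof (cases "\<forall>j<n. a1 j > 0 \<longrightarrow> pl U n > 0 \<or> pl U j > 0 \<or> (pl U (Suc n) > 0 \<and> a2 j > 0)")
  case Ry: True
  show ?thesis
  proof (cases "\<forall>j<n. a2 j > 0 \<longrightarrow> pl U (Suc n) > 0 \<or> pl U j > 0 \<or> (pl U n > 0 \<and> a1 j > 0)")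
    case True
    then show ?thesis using conn_rich[OF sU sV deg Ry] by simp
  next
    case False
    then obtain j0 where j0: "j0 < n" "a2 j0 > 0" "pl U (Suc n) = 0" "pl U j0 = 0" "\<not> (pl U n > 0 \<and> a1 j0 > 0)"
      by auto
    have "conn J V U" by (rule conn_notRz[OF sU sV deg j0(3,1,2,4,5)])
    then have "conn J (rep 0 U + V) (rep 0 U + U)" by simp
    then show ?thesis by (rule exI)
  qed
next
  case False
  then obtain j0 where j0: "j0 < n" "a1 j0 > 0" "pl U n = 0" "pl U j0 = 0" "\<not> (pl U (Suc n) > 0 \<and> a2 j0 > 0)"
    by auto
  have "conn J V U" by (rule conn_notRy[OF sU sV deg j0(3,1,2,4,5)])
  then have "conn J (rep 0 U + V) (rep 0 U + U)" by simp
  then show ?thesis by (rule exI)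
qed

lemma bin_shift: "(bin (w + u) (w + v) :: 'k mpoly) = mono w * bin u v"
  unfolding bin_def by (simp add: mono_add right_diff_distrib)

lemma bin_rad:
  assumes sU: "sp (n+2) U" and sV: "sp (n+2) V" and deg: "dg (n+2) n AA U = dg (n+2) n AA V"
  shows "bin U V \<in> radical (n+2) J"
proof -
  obtain K1 where K1: "conn J (rep K1 U + V) (rep K1 U + U)" using main_conn[OF sU sV deg] by blast
  obtain K2 where K2: "conn J (rep K2 V + U) (rep K2 V + V)" using main_conn[OF sV sU deg[symmetric]] by blast
  let ?x = "mono U :: 'k mpoly" and ?y = "mono V :: 'k mpoly"
  have "mono (rep K1 U) * bin V U \<in> J" using K1 unfolding conn_def bin_shift .
  then have "- (?x ^ K1 * (?y - ?x)) \<in> J" using ideal_uminus[OF J] by (simp add: mono_rep bin_def)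
  then have h1: "?x ^ K1 * (?x - ?y) \<in> J" by (simp add: right_diff_distrib)
  have "mono (rep K2 V) * bin U V \<in> J" using K2 unfolding conn_def bin_shift .
  then have h2: "?y ^ K2 * (?x - ?y) \<in> J" by (simp add: mono_rep bin_def)
  have "(?x - ?y) ^ (K1 + K2 + 1) \<in> J"
    by (rule binom_power_lemma[OF J poly_ring_mono[OF sU] poly_ring_mono[OF sV] h1 h2])
  then have "\<exists>e. bin U V ^ e \<in> J" unfolding bin_def by (rule exI)
  then show ?thesis unfolding radical_def using poly_ring_bin[OF sU sV] by simp
qed

end

lemma dg_eq_iff: "dg N m B u = dg N m B v \<longleftrightarrow> (\<forall>k<m. cfg_deg N B u k = cfg_deg N B v k)"
  by (auto simp: poly_mapping_eq_iff fun_eq_iff lookup_dg)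

context cor
begin

definition Bext :: "(nat \<Rightarrow> int) \<Rightarrow> nat \<Rightarrow> nat \<Rightarrow> int" where
  "Bext r = (\<lambda>j k. if k < n then AA j k else r j)"

lemma cfg_Bext_low: "k < n \<Longrightarrow> cfg_deg N (Bext r) u k = cfg_deg N AA u k"
  unfolding cfg_deg_def Bext_def by simp

lemma cfg_Bext_n: "cfg_deg N (Bext r) u n = (\<Sum>j<N. int (pl u j) * r j)"
  unfolding cfg_deg_def Bext_def by simp

lemma rowsum:
  assumes "\<forall>j<n. r j = 0"
  shows "(\<Sum>j<n + 2. int (pl u j) * r j) = int (pl u n) * r n + int (pl u (Suc n)) * r (Suc n)"
  using assms by (simp add: numeral_2_eq_2)

lemma Bext_refine:
  assumes h: "dg (n+2) (n+1) (Bext r) u = dg (n+2) (n+1) (Bext r) v"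
  shows "dg (n+2) n AA u = dg (n+2) n AA v"
  unfolding dg_eq_iff
proof (intro allI impI)
  fix k assume k: "k < n"
  have "cfg_deg (n+2) (Bext r) u k = cfg_deg (n+2) (Bext r) v k"
    using h k unfolding dg_eq_iff by simp
  then show "cfg_deg (n+2) AA u k = cfg_deg (n+2) AA v k" using cfg_Bext_low[OF k] by simp
qed

lemma Bext_sub: "(toric_ideal (n+2) (n+1) (Bext r) :: 'k::field mpoly set) \<subseteq> toric_ideal (n+2) n AA"
proof
  fix p :: "'k mpoly" assume p: "p \<in> toric_ideal (n+2) (n+1) (Bext r)"
  show "p \<in> toric_ideal (n+2) n AA"
    by (rule toric_refine[OF _ p], rule Bext_refine, assumption)
qed

lemma pointedA: "pointed_cfg (n+2) n AA"
  unfolding pointed_cfg_def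
proof (intro allI impI)
  fix v :: "nat \<Rightarrow> nat" and j
  assume h: "\<forall>k<n. (\<Sum>j<n + 2. int (v j) * AA j k) = 0" and j: "j < n + 2"
  have e: "int (v k) * int (d k) + int (v n) * int (a1 k) + int (v (Suc n)) * int (a2 k) = 0" if k: "k < n" for k
  proof -
    have "(\<Sum>j<n + 2. int (v j) * AA j k) = (\<Sum>j<n. int (v j) * AA j k) + int (v n) * AA n k + int (v (Suc n)) * AA (Suc n) k"
      by (simp add: numeral_2_eq_2)
    also have "(\<Sum>j<n. int (v j) * AA j k) = (\<Sum>j<n. if j = k then int (v k) * int (d k) else 0)"
      by (rule sum.cong) (auto simp: cor_cfg_def)
    also have "\<dots> = int (v k) * int (d k)" using k by (simp add: sum.delta)
    finally have S: "(\<Sum>j<n + 2. int (v j) * AA j k) = int (v k) * int (d k) + int (v n) * AA n k + int (v (Suc n)) * AA (Suc n) k" .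
    have hk: "(\<Sum>j<n + 2. int (v j) * AA j k) = 0" using h k by blast
    have "int (v k) * int (d k) + int (v n) * AA n k + int (v (Suc n)) * AA (Suc n) k = 0"
      using S hk by simp
    then show ?thesis using k by (simp add: cor_cfg_def)
  qed
  have z: "v k * d k = 0 \<and> v n * a1 k = 0 \<and> v (Suc n) * a2 k = 0" if k: "k < n" for k
  proof -
    have "int (v k * d k) + int (v n * a1 k) + int (v (Suc n) * a2 k) = 0" using e[OF k] by simp
    then show ?thesis by linarith
  qed
  obtain j1 where j1: "j1 < n" "a1 j1 \<noteq> 0" using a1nz by blast
  obtain j2 where j2: "j2 < n" "a2 j2 \<noteq> 0" using a2nz by blast
  have vn: "v n = 0" using z[OF j1(1)] j1 by simp
  have vsn: "v (Suc n) = 0" using z[OF j2(1)] j2 by simp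
  show "v j = 0"
  proof (cases "j < n")
    case True
    have "d j > 0" using dpos True by simp
    then show ?thesis using z[OF True] by simp
  next
    case False
    then have "j = n \<or> j = Suc n" using j by auto
    then show ?thesis using vn vsn by auto
  qed
qed

lemma pointed_Bext: "pointed_cfg (n+2) (n+1) (Bext r)"
  using pointedA unfolding pointed_cfg_def by (simp add: Bext_def)

definition rz :: "nat \<Rightarrow> int" where "rz j = (if j = Suc n then 1 else 0)"
definition ry :: "nat \<Rightarrow> int" where "ry j = (if j = n then 1 else 0)"
definition r3 :: "nat \<Rightarrow> int" where "r3 j = (if j = n then int q1 else if j = Suc n then - int p1 else 0)"

definition rowf :: "nat \<Rightarrow> nat \<Rightarrow> int" where
  "rowf i = (if i = 0 then rz else if i = 1 then ry else r3)"

definition Bs :: "nat \<Rightarrow> nat \<Rightarrow> nat \<Rightarrow> int" where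
  "Bs i = Bext (rowf i)"

lemma dg_Bext_eq:
  assumes "dg (n+2) n AA u = dg (n+2) n AA v" "\<forall>j<n. r j = 0"
    and "int (pl u n) * r n + int (pl u (Suc n)) * r (Suc n) = int (pl v n) * r n + int (pl v (Suc n)) * r (Suc n)"
  shows "dg (n+2) (n+1) (Bext r) u = dg (n+2) (n+1) (Bext r) v"
  unfolding dg_eq_iff
proof (intro allI impI)
  fix k assume "k < n + 1"
  then consider "k < n" | "k = n" by linarith
  then show "cfg_deg (n + 2) (Bext r) u k = cfg_deg (n + 2) (Bext r) v k"
  proof cases
    case 1 then show ?thesis using assms(1) unfolding dg_eq_iff by (simp add: cfg_Bext_low)
  next
    case 2 then show ?thesis using assms(2,3) by (simp add: cfg_Bext_n rowsum)
  qed
qed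

lemma dg_Bext_neq:
  assumes "\<forall>j<n. r j = 0"
    and "int (pl u n) * r n + int (pl u (Suc n)) * r (Suc n) \<noteq> int (pl v n) * r n + int (pl v (Suc n)) * r (Suc n)"
  shows "dg (n+2) (n+1) (Bext r) u \<noteq> dg (n+2) (n+1) (Bext r) v"
proof
  assume "dg (n+2) (n+1) (Bext r) u = dg (n+2) (n+1) (Bext r) v"
  then have "cfg_deg (n + 2) (Bext r) u n = cfg_deg (n + 2) (Bext r) v n" unfolding dg_eq_iff by simp
  then show False using assms by (simp add: cfg_Bext_n rowsum)
qed

lemma rows_low: "\<forall>j<n. rz j = 0" "\<forall>j<n. ry j = 0" "\<forall>j<n. r3 j = 0"
  unfolding rz_def ry_def r3_def by auto


definition IB :: "nat \<Rightarrow> 'k::field mpoly set" where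
  "IB i = toric_ideal (n+2) (n+1) (Bs i)"

definition JJ :: "'k::field mpoly set" where
  "JJ = ideal_sum 3 IB"

lemma IB_ideal: "is_ideal (n+2) (IB i)"
  unfolding IB_def by (rule toric_is_ideal)

lemma JJ_ideal: "is_ideal (n+2) JJ"
  unfolding JJ_def by (rule ideal_sum_is_ideal) (rule IB_ideal)

lemma IB_sub: "IB i \<subseteq> toric_ideal (n+2) n AA"
  unfolding IB_def Bs_def by (rule Bext_sub)

lemma IB0: "IB 0 = toric_ideal (n+2) (n+1) (Bext rz)" unfolding IB_def Bs_def rowf_def by simp
lemma IB1: "IB 1 = toric_ideal (n+2) (n+1) (Bext ry)" unfolding IB_def Bs_def rowf_def by simp
lemma IB2: "IB 2 = toric_ideal (n+2) (n+1) (Bext r3)" unfolding IB_def Bs_def rowf_def by simp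

lemma gen1: "bin P1 Q1 \<in> IB 0"
  unfolding IB0
  by (rule bin_in_toric[OF sp_vecs(1,2)], rule dg_Bext_eq[OF dgA_P1Q1 rows_low(1)])
     (simp add: lookup_vecs rz_def)

lemma gen2: "bin P2 Q2 \<in> IB 1"
  unfolding IB1
  by (rule bin_in_toric[OF sp_vecs(3,4)], rule dg_Bext_eq[OF dgA_P2Q2 rows_low(2)])
     (simp add: lookup_vecs ry_def)

lemma gen3: "bin P3 Q3 \<in> IB 2"
  unfolding IB2
  by (rule bin_in_toric[OF sp_vecs(5,6)], rule dg_Bext_eq[OF dgA_P3Q3 rows_low(3)])
     (simp add: lookup_vecs r3_def)

lemma JJ_gen1: "bin P1 Q1 \<in> JJ"
  unfolding JJ_def by (rule ideal_sum_member[where j = 0 and N = "n+2", OF IB_ideal]) (simp_all add: gen1 del: One_nat_def)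
lemma JJ_gen2: "bin P2 Q2 \<in> JJ"
  unfolding JJ_def by (rule ideal_sum_member[where j = 1 and N = "n+2", OF IB_ideal]) (simp_all add: gen2 del: One_nat_def)
lemma JJ_gen3: "bin P3 Q3 \<in> JJ"
  unfolding JJ_def by (rule ideal_sum_member[where j = 2 and N = "n+2", OF IB_ideal]) (simp_all add: gen3 del: One_nat_def)
lemmas JJ_gens = JJ_gen1 JJ_gen2 JJ_gen3

lemma JJ_sub: "JJ \<subseteq> toric_ideal (n+2) n AA"
proof
  fix x assume "x \<in> JJ"
  then obtain f where x: "x = (\<Sum>i<3. f i)" "\<forall>i<3. f i \<in> IB i"
    unfolding JJ_def ideal_sum_def by blast
  show "x \<in> toric_ideal (n+2) n AA"
    unfolding x(1) by (rule ideal_sum[OF toric_is_ideal]) (use x(2) IB_sub in blast)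
qed

lemma IA_eq: "toric_ideal (n+2) n AA = radical (n+2) JJ"
proof
  interpret J: corJ n d a1 a2 JJ
    by unfold_locales (use JJ_ideal JJ_gens in simp_all)
  show "toric_ideal (n+2) n AA \<subseteq> radical (n+2) JJ"
  proof
    fix p assume p: "p \<in> toric_ideal (n+2) n AA"
    show "p \<in> radical (n+2) JJ"
      by (rule toric_sub_ideal[OF radical_is_ideal[OF JJ_ideal] _ p]) (rule J.bin_rad)
  qed
  show "radical (n+2) JJ \<subseteq> toric_ideal (n+2) n AA"
  proof
    fix f assume "f \<in> radical (n+2) JJ"
    then obtain e where "f \<in> poly_ring (n+2)" "f ^ e \<in> JJ" unfolding radical_def by blast
    then show "f \<in> toric_ideal (n+2) n AA" using JJ_sub toric_radical by blast
  qed
qed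

lemma IB_neq: "i < 3 \<Longrightarrow> IB i \<noteq> toric_ideal (n+2) n AA"
proof -
  assume i: "i < 3"
  have pq: "p0 > 0" "q1 > 0" using p0_prop q1_prop by auto
  have inA1: "bin P1 Q1 \<in> toric_ideal (n+2) n AA" by (rule bin_in_toric[OF sp_vecs(1,2) dgA_P1Q1])
  have inA3: "bin P3 Q3 \<in> toric_ideal (n+2) n AA" by (rule bin_in_toric[OF sp_vecs(5,6) dgA_P3Q3])
  consider "i = 0" | "i = 1" | "i = 2" using i by linarith
  then show ?thesis
  proof cases
    case 1
    have "bin P3 Q3 \<notin> IB 0" unfolding IB0
      by (rule bin_not_in_toric, rule dg_Bext_neq[OF rows_low(1)]) (use pq in \<open>simp add: lookup_vecs rz_def\<close>)
    then show ?thesis using 1 inA3 by blast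
  next
    case 2
    have "bin P1 Q1 \<notin> IB 1" unfolding IB1
      by (rule bin_not_in_toric, rule dg_Bext_neq[OF rows_low(2)]) (use pq in \<open>simp add: lookup_vecs ry_def\<close>)
    then show ?thesis using 2 inA1 by blast
  next
    case 3
    have "bin P1 Q1 \<notin> IB 2" unfolding IB2
      by (rule bin_not_in_toric, rule dg_Bext_neq[OF rows_low(3)]) (use pq in \<open>simp add: lookup_vecs r3_def\<close>)
    then show ?thesis using 3 inA1 by blast
  qed
qed

lemma splittable3: "rad_splittable TYPE('k::field) (n+2) n AA 3"
  unfolding rad_splittable_def
proof (intro exI conjI allI impI)
  show "pointed_cfg (n + 2) ((\<lambda>_. n + 1) i) (Bs i)" for i
    unfolding Bs_def by (rule pointed_Bext)
  show "(toric_ideal (n + 2) ((\<lambda>_. n + 1) i) (Bs i) :: 'k mpoly set) \<noteq> toric_ideal (n + 2) n AA" if "i < 3" for i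
    using IB_neq[OF that] unfolding IB_def by simp
  show "(toric_ideal (n + 2) n AA :: 'k mpoly set) = radical (n + 2) (ideal_sum 3 (\<lambda>i. toric_ideal (n + 2) ((\<lambda>_. n + 1) i) (Bs i)))"
    using IA_eq unfolding JJ_def IB_def by simp
qed

lemma not_splittable0: "\<not> rad_splittable TYPE('k::field) (n+2) n AA 0"
proof
  assume "rad_splittable TYPE('k::field) (n+2) n AA 0"
  then obtain ms Bs' where eq: "(toric_ideal (n+2) n AA :: 'k mpoly set) = radical (n+2) (ideal_sum 0 (\<lambda>i. toric_ideal (n+2) (ms i) (Bs' i)))"
    unfolding rad_splittable_def by blast
  have "ideal_sum 0 (\<lambda>i. toric_ideal (n+2) (ms i) (Bs' i) :: 'k mpoly set) = {0}"
    unfolding ideal_sum_def by auto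
  then have "(toric_ideal (n+2) n AA :: 'k mpoly set) \<subseteq> {0}"
    using eq unfolding radical_def by auto
  moreover have "(bin P1 Q1 :: 'k mpoly) \<in> toric_ideal (n+2) n AA" by (rule bin_in_toric[OF sp_vecs(1,2) dgA_P1Q1])
  moreover have "P1 \<noteq> Q1"
  proof
    assume "P1 = Q1"
    then have "pl P1 n = pl Q1 n" by simp
    then show False using p0_prop by (simp add: lookup_vecs)
  qed
  then have "(bin P1 Q1 :: 'k mpoly) \<noteq> 0" by (rule bin_nonzero)
  ultimately show False by blast
qed

lemma not_splittable1: "\<not> rad_splittable TYPE('k::field) (n+2) n AA 1"
proof
  assume "rad_splittable TYPE('k::field) (n+2) n AA 1"
  then obtain ms Bs' where ne: "(toric_ideal (n+2) (ms 0) (Bs' 0) :: 'k mpoly set) \<noteq> toric_ideal (n+2) n AA"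
    and eq: "(toric_ideal (n+2) n AA :: 'k mpoly set) = radical (n+2) (ideal_sum 1 (\<lambda>i. toric_ideal (n+2) (ms i) (Bs' i)))"
    unfolding rad_splittable_def by blast
  let ?T = "toric_ideal (n+2) (ms 0) (Bs' 0) :: 'k mpoly set"
  have "ideal_sum 1 (\<lambda>i. toric_ideal (n+2) (ms i) (Bs' i) :: 'k mpoly set) = ?T"
    unfolding ideal_sum_def by (auto intro: exI[of _ "\<lambda>_. x" for x])
  moreover have "radical (n+2) ?T = ?T"
  proof
    show "radical (n+2) ?T \<subseteq> ?T" unfolding radical_def using toric_radical by blast
    show "?T \<subseteq> radical (n+2) ?T" by (rule subset_radical[OF toric_is_ideal])
  qed
  ultimately show False using eq ne by simp
qed

end

theorem corollary4p4:
  fixes n :: nat and d a1 a2 :: "nat \<Rightarrow> nat"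
  assumes "\<forall>j<n. d j > 0"
    and "\<exists>j<n. a1 j \<noteq> 0"
    and "\<exists>j<n. a2 j \<noteq> 0"
  shows "2 \<le> split_rad TYPE('k::field) (n + 2) n (cor_cfg n d a1 a2)
         \<and> split_rad TYPE('k::field) (n + 2) n (cor_cfg n d a1 a2) \<le> 3"
proof -
  interpret cor n d a1 a2 using assms by unfold_locales
  have s3: "rad_splittable TYPE('k) (n+2) n AA 3" by (rule splittable3)
  have le3: "split_rad TYPE('k) (n + 2) n AA \<le> 3"
    unfolding split_rad_def by (rule Least_le[where P = "\<lambda>r. rad_splittable TYPE('k) (n+2) n AA r", OF s3])
  have sl: "rad_splittable TYPE('k) (n+2) n AA (split_rad TYPE('k) (n + 2) n AA)"
    unfolding split_rad_def by (rule LeastI[where P = "\<lambda>r. rad_splittable TYPE('k) (n+2) n AA r", OF s3])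
  have ge2: "2 \<le> split_rad TYPE('k) (n + 2) n AA"
  proof (rule ccontr)
    assume "\<not> 2 \<le> split_rad TYPE('k) (n + 2) n AA"
    then have "split_rad TYPE('k) (n + 2) n AA = 0 \<or> split_rad TYPE('k) (n + 2) n AA = 1" by linarith
    then show False using sl not_splittable0 not_splittable1 by auto
  qed
  show ?thesis using le3 ge2 by simp
qed


end
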